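(* Let $g(t)$, $t\in[0,T)$, be a solution of the Ricci flow $\partial_t g_{ij}=-2R_{ij}$ on an $n$-manifold $M$, let $\tau\in[0,T)$, and let $\tilde g_\tau$ and $\tilde\nabla_\tau$ be the degenerate cometric and connection on $\tilde M_\tau=M\times[0,T-\tau)$ described in the context. Then the pair $(\tilde g_\tau,\tilde\nabla_\tau)$ is a solution to the Ricci flow for degenerate metrics, i.e. for all $0\le i,j,k\le n$, $$\frac{\partial}{\partial t}\tilde g^{ij}=2\sum_{k,l=0}^n\tilde g^{ik}\tilde g^{jl}\tilde R_{kl},\qquad \frac{\partial}{\partial t}\tilde\Gamma_{ij}^k=-\sum_{l=0}^n\tilde g^{kl}\big(\tilde\nabla_i\tilde R_{jl}+\tilde\nabla_j\tilde R_{il}-\tilde\nabla_l\tilde R_{ij}\big).$$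
   Context: Conventions for a metric $g$ on $M$ with Christoffel symbols $\Gamma_{ij}^k$: $R_{ijk}^l=\partial_i\Gamma_{jk}^l-\partial_j\Gamma_{ik}^l+\Gamma_{jk}^m\Gamma_{im}^l-\Gamma_{ik}^m\Gamma_{jm}^l$, $R_{ijkl}=g_{lm}R_{ijk}^m$, $R_{jk}=R_{pjk}^p$, $R=g^{jk}R_{jk}$; indices are raised with $g^{-1}$ and repeated indices are summed. Use local coordinates $x^1,\dots,x^n$ on $M$ and $x^0=t$ on the time factor of $\tilde M_\tau=M\times[0,T-\tau)$. The degenerate metric $\tilde g_\tau$ on the cotangent bundle of $\tilde M_\tau$ is $\tilde g^{ij}(x,t)=g^{ij}(x,t+\tau)$ for $1\le i,j\le n$ and $\tilde g^{ij}=0$ if $i=0$ or $j=0$. The connection $\tilde\nabla_\tau$ on $T\tilde M_\tau$ has Christoffel symbols (left sides at $(x,t)$, right sides computed from $g$ at $(x,t+\tau)$): $\tilde\Gamma_{ij}^k=\Gamma_{ij}^k$ for $1\le i,j,k\le n$; $\tilde\Gamma_{ij}^0=0$ for $0\le i,j\le n$; $\tilde\Gamma_{i0}^k=\tilde\Gamma_{0i}^k=-R_i^k$ for $1\le i,k\le n$; $\tilde\Gamma_{00}^k=-\tfrac12\nabla^kR$ for $1\le k\le n$. Its curvature is $\tilde R_{ijk}^l=\partial_i\tilde\Gamma_{jk}^l-\partial_j\tilde\Gamma_{ik}^l+\sum_{m=0}^n(\tilde\Gamma_{jk}^m\tilde\Gamma_{im}^l-\tilde\Gamma_{ik}^m\tilde\Gamma_{jm}^l)$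 with all indices in $\{0,\dots,n\}$ and $\partial_0=\partial_t$, and its Ricci tensor is $\tilde R_{jk}=\sum_{p=0}^n\tilde R_{pjk}^p$. $\tilde\nabla_i\tilde R_{jl}$ denotes the covariant derivative of this $(0,2)$-tensor with respect to $\tilde\nabla_\tau$. *)

theory Defs
  imports "HOL-Analysis.Analysis"
begin

text \<open>The spatial index type 'n has CARD('n) = n elements; for the extended space
  M x [0,T-tau) the index type is 'n option, with None playing the role of index 0 (time).\<close>

type_synonym 'n pt = "(real^'n) \<times> real"

definition dirderiv :: "'a::real_normed_vector \<Rightarrow> ('a \<Rightarrow> real) \<Rightarrow> 'a \<Rightarrow> real" where
  "dirderiv v f p = frechet_derivative f (at p) v"

definition smooth_on :: "'a::real_normed_vector set \<Rightarrow> ('a \<Rightarrow> real) \<Rightarrow> bool" where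
  "smooth_on S f \<longleftrightarrow> open S \<and>
     (\<forall>vs p. p \<in> S \<longrightarrow> (foldr dirderiv vs f) differentiable (at p))"

definition dx :: "'n::finite \<Rightarrow> ('n pt \<Rightarrow> real) \<Rightarrow> 'n pt \<Rightarrow> real" where
  "dx i f p = dirderiv (axis i 1, 0) f p"

definition dt :: "('n::finite pt \<Rightarrow> real) \<Rightarrow> 'n pt \<Rightarrow> real" where
  "dt f p = dirderiv (0, 1) f p"

definition dtil :: "'n::finite option \<Rightarrow> ('n pt \<Rightarrow> real) \<Rightarrow> 'n pt \<Rightarrow> real" where
  "dtil a f p = (case a of None \<Rightarrow> dt f p | Some i \<Rightarrow> dx i f p)"

text \<open>Generic curvature, Ricci tensor and covariant derivative of a (0,2)-tensor,
  for a connection with Christoffel symbols C i j k (= Gamma_ij^k) and coordinate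
  partial derivative operator D, following the conventions of the context.\<close>
definition curv :: "('i::finite \<Rightarrow> ('p \<Rightarrow> real) \<Rightarrow> 'p \<Rightarrow> real) \<Rightarrow> ('i \<Rightarrow> 'i \<Rightarrow> 'i \<Rightarrow> 'p \<Rightarrow> real)
    \<Rightarrow> 'i \<Rightarrow> 'i \<Rightarrow> 'i \<Rightarrow> 'i \<Rightarrow> 'p \<Rightarrow> real" where
  "curv D C i j k l p = D i (C j k l) p - D j (C i k l) p
     + (\<Sum>m\<in>UNIV. C j k m p * C i m l p - C i k m p * C j m l p)"

definition ricci :: "('i::finite \<Rightarrow> ('p \<Rightarrow> real) \<Rightarrow> 'p \<Rightarrow> real) \<Rightarrow> ('i \<Rightarrow> 'i \<Rightarrow> 'i \<Rightarrow> 'p \<Rightarrow> real)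
    \<Rightarrow> 'i \<Rightarrow> 'i \<Rightarrow> 'p \<Rightarrow> real" where
  "ricci D C j k p = (\<Sum>q\<in>UNIV. curv D C q j k q p)"

definition covd2 :: "('i::finite \<Rightarrow> ('p \<Rightarrow> real) \<Rightarrow> 'p \<Rightarrow> real) \<Rightarrow> ('i \<Rightarrow> 'i \<Rightarrow> 'i \<Rightarrow> 'p \<Rightarrow> real)
    \<Rightarrow> ('i \<Rightarrow> 'i \<Rightarrow> 'p \<Rightarrow> real) \<Rightarrow> 'i \<Rightarrow> 'i \<Rightarrow> 'i \<Rightarrow> 'p \<Rightarrow> real" where
  "covd2 D C S i j l p = D i (S j l) p
     - (\<Sum>m\<in>UNIV. C i j m p * S m l p) - (\<Sum>m\<in>UNIV. C i l m p * S j m p)"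

definition gmat :: "('n::finite \<Rightarrow> 'n \<Rightarrow> 'n pt \<Rightarrow> real) \<Rightarrow> 'n pt \<Rightarrow> real^'n^'n" where
  "gmat g p = (\<chi> i j. g i j p)"

definition ginv :: "('n::finite \<Rightarrow> 'n \<Rightarrow> 'n pt \<Rightarrow> real) \<Rightarrow> 'n \<Rightarrow> 'n \<Rightarrow> 'n pt \<Rightarrow> real" where
  "ginv g i j p = matrix_inv (gmat g p) $ i $ j"

definition christoffel :: "('n::finite \<Rightarrow> 'n \<Rightarrow> 'n pt \<Rightarrow> real) \<Rightarrow> 'n \<Rightarrow> 'n \<Rightarrow> 'n \<Rightarrow> 'n pt \<Rightarrow> real" where
  "christoffel g i j k p = (1/2) * (\<Sum>l\<in>UNIV. ginv g k l p *
      (dx i (g j l) p + dx j (g i l) p - dx l (g i j) p))"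

definition Ric :: "('n::finite \<Rightarrow> 'n \<Rightarrow> 'n pt \<Rightarrow> real) \<Rightarrow> 'n \<Rightarrow> 'n \<Rightarrow> 'n pt \<Rightarrow> real" where
  "Ric g = ricci dx (christoffel g)"

definition Ric_up :: "('n::finite \<Rightarrow> 'n \<Rightarrow> 'n pt \<Rightarrow> real) \<Rightarrow> 'n \<Rightarrow> 'n \<Rightarrow> 'n pt \<Rightarrow> real" where
  "Ric_up g i k p = (\<Sum>j\<in>UNIV. ginv g k j p * Ric g i j p)"

definition scal :: "('n::finite \<Rightarrow> 'n \<Rightarrow> 'n pt \<Rightarrow> real) \<Rightarrow> 'n pt \<Rightarrow> real" where
  "scal g p = (\<Sum>j\<in>UNIV. \<Sum>k\<in>UNIV. ginv g j k p * Ric g j k p)"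

definition grad_scal :: "('n::finite \<Rightarrow> 'n \<Rightarrow> 'n pt \<Rightarrow> real) \<Rightarrow> 'n \<Rightarrow> 'n pt \<Rightarrow> real" where
  "grad_scal g k p = (\<Sum>l\<in>UNIV. ginv g k l p * dx l (scal g) p)"

definition gtil :: "('n::finite \<Rightarrow> 'n \<Rightarrow> 'n pt \<Rightarrow> real) \<Rightarrow> real
    \<Rightarrow> 'n option \<Rightarrow> 'n option \<Rightarrow> 'n pt \<Rightarrow> real" where
  "gtil g \<tau> a b p = (case (a, b) of
      (Some i, Some j) \<Rightarrow> ginv g i j (fst p, snd p + \<tau>)
    | _ \<Rightarrow> 0)"

definition Gtil :: "('n::finite \<Rightarrow> 'n \<Rightarrow> 'n pt \<Rightarrow> real) \<Rightarrow> real
    \<Rightarrow> 'n option \<Rightarrow> 'n option \<Rightarrow> 'n option \<Rightarrow> 'n pt \<Rightarrow> real" where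
  "Gtil g \<tau> a b c p = (let q = (fst p, snd p + \<tau>) in
     case (a, b, c) of
       (_, _, None) \<Rightarrow> 0
     | (Some i, Some j, Some k) \<Rightarrow> christoffel g i j k q
     | (Some i, None, Some k) \<Rightarrow> - Ric_up g i k q
     | (None, Some i, Some k) \<Rightarrow> - Ric_up g i k q
     | (None, None, Some k) \<Rightarrow> - (1/2) * grad_scal g k q)"

definition Rictil :: "('n::finite \<Rightarrow> 'n \<Rightarrow> 'n pt \<Rightarrow> real) \<Rightarrow> real
    \<Rightarrow> 'n option \<Rightarrow> 'n option \<Rightarrow> 'n pt \<Rightarrow> real" where
  "Rictil g \<tau> = ricci dtil (Gtil g \<tau>)"

definition ricci_flow_on :: "(real^'n::finite) set \<Rightarrow> real \<Rightarrow> ('n \<Rightarrow> 'n \<Rightarrow> 'n pt \<Rightarrow> real) \<Rightarrow> bool" where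
  "ricci_flow_on U T g \<longleftrightarrow> open U \<and>
     (\<forall>i j. smooth_on (U \<times> {0<..<T}) (g i j)) \<and>
     (\<forall>i j p. p \<in> U \<times> {0<..<T} \<longrightarrow> g i j p = g j i p) \<and>
     (\<forall>p v. p \<in> U \<times> {0<..<T} \<longrightarrow> v \<noteq> 0 \<longrightarrow> v \<bullet> (gmat g p *v v) > 0) \<and>
     (\<forall>i j p. p \<in> U \<times> {0<..<T} \<longrightarrow> dt (g i j) p = -2 * Ric g i j p)"

end

theory Submission
  imports Defs
begin

lemma dirderiv_local:
  assumes "open S" "p \<in> S" "\<And>q. q \<in> S \<Longrightarrow> f q = h q"
  shows "dirderiv v f p = dirderiv v h p"
proof -
  have "(f has_derivative D) (at p) \<longleftrightarrow> (h has_derivative D) (at p)" for D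
    using has_derivative_transform_within_open[of f D p UNIV S h]
      has_derivative_transform_within_open[of h D p UNIV S f] assms by auto
  then show ?thesis unfolding dirderiv_def frechet_derivative_def by simp
qed

lemma differentiable_local:
  assumes "open S" "p \<in> S" "\<And>q. q \<in> S \<Longrightarrow> f q = h q" "f differentiable at p"
  shows "h differentiable at p"
  using has_derivative_transform_within_open[of f _ p UNIV S h] assms
  unfolding differentiable_def by blast

lemma dirderiv_shift: "dirderiv v (\<lambda>q. f (q + c)) p = dirderiv v f (p + c)"
proof -
  have 1: "((\<lambda>q. k (q + d)) has_derivative D) (at x)" if "(k has_derivative D) (at (x + d))"
    for k :: "'a \<Rightarrow> 'b::real_normed_vector" and d x D
  proof -
    have "((\<lambda>q. q + d) has_derivative (\<lambda>q. q)) (at x)"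
      by (intro derivative_eq_intros) auto
    from has_derivative_compose[OF this that] show ?thesis by simp
  qed
  have "((\<lambda>q. f (q + c)) has_derivative D) (at p) \<longleftrightarrow> (f has_derivative D) (at (p + c))" for D
  proof
    assume "((\<lambda>q. f (q + c)) has_derivative D) (at p)"
    from 1[of "\<lambda>q. f (q + c)" D "p + c" "- c", simplified, OF this] show "(f has_derivative D) (at (p + c))"
      by simp
  qed (rule 1)
  then show ?thesis unfolding dirderiv_def frechet_derivative_def by simp
qed

lemma fd_at: "f differentiable at p \<Longrightarrow> (f has_derivative frechet_derivative f (at p)) (at p)"
  using frechet_derivative_works by blast

lemma dirderiv_const [simp]: "dirderiv v (\<lambda>q. c) p = 0"
  unfolding dirderiv_def by simp

lemma dirderiv_add:
  assumes "f differentiable at p" "h differentiable at p"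
  shows "dirderiv v (\<lambda>q. f q + h q) p = dirderiv v f p + dirderiv v h p"
  using frechet_derivative_at[OF has_derivative_add[OF fd_at[OF assms(1)] fd_at[OF assms(2)]]]
  unfolding dirderiv_def by (metis (mono_tags, lifting))

lemma dirderiv_diff:
  assumes "f differentiable at p" "h differentiable at p"
  shows "dirderiv v (\<lambda>q. f q - h q) p = dirderiv v f p - dirderiv v h p"
  using frechet_derivative_at[OF has_derivative_diff[OF fd_at[OF assms(1)] fd_at[OF assms(2)]]]
  unfolding dirderiv_def by (metis (mono_tags, lifting))

lemma dirderiv_minus:
  assumes "f differentiable at p"
  shows "dirderiv v (\<lambda>q. - f q) p = - dirderiv v f p"
  using frechet_derivative_at[OF has_derivative_minus[OF fd_at[OF assms(1)]]]
  unfolding dirderiv_def by (metis (mono_tags, lifting))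

lemma dirderiv_mult:
  fixes f h :: "'a::real_normed_vector \<Rightarrow> real"
  assumes "f differentiable at p" "h differentiable at p"
  shows "dirderiv v (\<lambda>q. f q * h q) p = dirderiv v f p * h p + f p * dirderiv v h p"
  using frechet_derivative_at[OF has_derivative_mult[OF fd_at[OF assms(1)] fd_at[OF assms(2)]]]
  unfolding dirderiv_def by (metis (mono_tags, lifting) add.commute)

lemma dirderiv_cmult:
  fixes f :: "'a::real_normed_vector \<Rightarrow> real"
  assumes "f differentiable at p"
  shows "dirderiv v (\<lambda>q. c * f q) p = c * dirderiv v f p"
  using dirderiv_mult[OF differentiable_const assms, of v c] by simp

lemma dirderiv_sum:
  fixes f :: "'i \<Rightarrow> 'a::real_normed_vector \<Rightarrow> real"
  assumes "finite A" "\<And>i. i \<in> A \<Longrightarrow> f i differentiable at p"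
  shows "dirderiv v (\<lambda>q. \<Sum>i\<in>A. f i q) p = (\<Sum>i\<in>A. dirderiv v (f i) p)"
  using assms
proof (induction A rule: finite_induct)
  case empty then show ?case by simp
next
  case (insert a A)
  have d: "(\<lambda>q. \<Sum>i\<in>A. f i q) differentiable at p"
    using insert by (intro differentiable_sum) auto
  have "dirderiv v (\<lambda>q. \<Sum>i\<in>insert a A. f i q) p = dirderiv v (\<lambda>q. f a q + (\<Sum>i\<in>A. f i q)) p"
    using insert by simp
  also have "\<dots> = dirderiv v (f a) p + dirderiv v (\<lambda>q. \<Sum>i\<in>A. f i q) p"
    by (rule dirderiv_add) (use insert d in auto)
  finally show ?case using insert by simp
qed


section \<open>Finite-order smoothness classes\<close>

fun Ck :: "nat \<Rightarrow> 'a::real_normed_vector set \<Rightarrow> ('a \<Rightarrow> real) \<Rightarrow> bool" where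
  "Ck 0 S f = (\<forall>p\<in>S. f differentiable at p)"
| "Ck (Suc n) S f = ((\<forall>p\<in>S. f differentiable at p) \<and> (\<forall>v. Ck n S (dirderiv v f)))"

lemma foldr_snoc: "foldr dirderiv (vs @ [v]) f = foldr dirderiv vs (dirderiv v f)"
  by simp

lemma Ck_iff: "Ck n S f \<longleftrightarrow> (\<forall>vs. length vs \<le> n \<longrightarrow> (\<forall>p\<in>S. foldr dirderiv vs f differentiable at p))"
proof (induction n arbitrary: f)
  case 0 then show ?case by auto
next
  case (Suc n)
  show ?case
  proof
    assume H: "Ck (Suc n) S f"
    show "\<forall>vs. length vs \<le> Suc n \<longrightarrow> (\<forall>p\<in>S. foldr dirderiv vs f differentiable at p)"
    proof (intro allI impI)
      fix vs :: "'a list" assume L: "length vs \<le> Suc n"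
      show "\<forall>p\<in>S. foldr dirderiv vs f differentiable at p"
      proof (cases vs rule: rev_cases)
        case Nil then show ?thesis using H by simp
      next
        case (snoc ws v)
        then have "length ws \<le> n" using L by simp
        with H Suc.IH[of "dirderiv v f"] show ?thesis using snoc by simp
      qed
    qed
  next
    assume H: "\<forall>vs. length vs \<le> Suc n \<longrightarrow> (\<forall>p\<in>S. foldr dirderiv vs f differentiable at p)"
    have "\<forall>p\<in>S. f differentiable at p" using H[rule_format, of "[]"] by simp
    moreover have "Ck n S (dirderiv v f)" for v
      unfolding Suc.IH
    proof (intro allI impI)
      fix vs :: "'a list" assume "length vs \<le> n"
      then show "\<forall>p\<in>S. foldr dirderiv vs (dirderiv v f) differentiable at p"
        using H[rule_format, of "vs @ [v]"] by simp
    qed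
    ultimately show "Ck (Suc n) S f" by simp
  qed
qed

lemma smooth_on_Ck: "smooth_on S f \<longleftrightarrow> open S \<and> (\<forall>n. Ck n S f)"
  unfolding smooth_on_def Ck_iff by auto

lemma Ck_diffble: "Ck n S f \<Longrightarrow> p \<in> S \<Longrightarrow> f differentiable at p"
  by (cases n) auto

lemma Ck_mono: "Ck (Suc n) S f \<Longrightarrow> Ck n S f"
  by (induction n arbitrary: f) auto

lemma Ck_transfer:
  assumes "open S" "\<And>q. q \<in> S \<Longrightarrow> f q = h q" "Ck n S f"
  shows "Ck n S h"
  using assms(2,3)
proof (induction n arbitrary: f h)
  case 0 then show ?case using differentiable_local[OF assms(1) _ 0(1)] by auto
next
  case (Suc n)
  have "\<forall>p\<in>S. h differentiable at p" using Suc.prems differentiable_local[OF assms(1) _ Suc.prems(1)] by auto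
  moreover have "Ck n S (dirderiv v h)" for v
  proof -
    have "\<And>q. q \<in> S \<Longrightarrow> dirderiv v f q = dirderiv v h q"
      using dirderiv_local[OF assms(1)] Suc.prems(1) by blast
    then show ?thesis using Suc.IH[of "dirderiv v f" "dirderiv v h"] Suc.prems by auto
  qed
  ultimately show ?case by simp
qed

lemma Ck_const: "Ck n S (\<lambda>q. c)"
proof (induction n arbitrary: c)
  case (Suc n)
  have "dirderiv v (\<lambda>q::'a. c) = (\<lambda>q. 0)" for v by (rule ext) simp
  then have "\<forall>v. Ck n S (dirderiv v (\<lambda>q::'a. c))" using Suc[of 0] by metis
  then show ?case by simp
qed simp

lemma Ck_add:
  assumes "open S" "Ck n S f" "Ck n S h"
  shows "Ck n S (\<lambda>q. f q + h q)"
  using assms(2,3)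
proof (induction n arbitrary: f h)
  case 0 then show ?case by auto
next
  case (Suc n)
  have "Ck n S (dirderiv v (\<lambda>q. f q + h q))" for v
  proof (rule Ck_transfer[OF assms(1)])
    show "Ck n S (\<lambda>q. dirderiv v f q + dirderiv v h q)" using Suc by auto
    show "\<And>q. q \<in> S \<Longrightarrow> dirderiv v f q + dirderiv v h q = dirderiv v (\<lambda>q. f q + h q) q"
      using Suc.prems by (simp add: dirderiv_add)
  qed
  then show ?case using Suc.prems by auto
qed

lemma Ck_minus:
  assumes "open S" "Ck n S f"
  shows "Ck n S (\<lambda>q. - f q)"
  using assms(2)
proof (induction n arbitrary: f)
  case 0 then show ?case by auto
next
  case (Suc n)
  have "Ck n S (dirderiv v (\<lambda>q. - f q))" for v
  proof (rule Ck_transfer[OF assms(1)])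
    show "Ck n S (\<lambda>q. - dirderiv v f q)" using Suc by auto
    show "\<And>q. q \<in> S \<Longrightarrow> - dirderiv v f q = dirderiv v (\<lambda>q. - f q) q"
      using Suc.prems by (simp add: dirderiv_minus)
  qed
  then show ?case using Suc.prems by auto
qed

lemma Ck_diff:
  assumes "open S" "Ck n S f" "Ck n S h"
  shows "Ck n S (\<lambda>q. f q - h q)"
  using Ck_add[OF assms(1,2) Ck_minus[OF assms(1,3)]] by simp

lemma Ck_mult:
  assumes "open S" "Ck n S f" "Ck n S h"
  shows "Ck n S (\<lambda>q. f q * h q)"
  using assms(2,3)
proof (induction n arbitrary: f h)
  case 0 then show ?case by auto
next
  case (Suc n)
  have "Ck n S (dirderiv v (\<lambda>q. f q * h q))" for v
  proof (rule Ck_transfer[OF assms(1)])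
    show "Ck n S (\<lambda>q. dirderiv v f q * h q + f q * dirderiv v h q)"
      using Suc Ck_mono[of n S f] Ck_mono[of n S h] by (intro Ck_add[OF assms(1)]) auto
    show "\<And>q. q \<in> S \<Longrightarrow> dirderiv v f q * h q + f q * dirderiv v h q = dirderiv v (\<lambda>q. f q * h q) q"
      using Suc.prems by (simp add: dirderiv_mult)
  qed
  then show ?case using Suc.prems by auto
qed

lemma Ck_sum:
  assumes "open S" "finite A" "\<And>i. i \<in> A \<Longrightarrow> Ck n S (f i)"
  shows "Ck n S (\<lambda>q. \<Sum>i\<in>A. f i q)"
  using assms(2,3)
proof (induction A rule: finite_induct)
  case empty then show ?case by (simp add: Ck_const)
next
  case (insert a A)
  then show ?case using Ck_add[OF assms(1), of n "f a" "\<lambda>q. \<Sum>i\<in>A. f i q"] by simp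
qed

lemma Ck_prod:
  assumes "open S" "finite A" "\<And>i. i \<in> A \<Longrightarrow> Ck n S (f i)"
  shows "Ck n S (\<lambda>q. \<Prod>i\<in>A. f i q)"
  using assms(2,3)
proof (induction A rule: finite_induct)
  case empty then show ?case by (simp add: Ck_const)
next
  case (insert a A)
  then show ?case using Ck_mult[OF assms(1), of n "f a" "\<lambda>q. \<Prod>i\<in>A. f i q"] by simp
qed

lemma Ck_inverse:
  assumes "open S" "Ck n S f" "\<And>q. q \<in> S \<Longrightarrow> f q \<noteq> 0"
  shows "Ck n S (\<lambda>q. inverse (f q))"
  using assms(2)
proof (induction n)
  case 0 then show ?case using assms(3) differentiable_inverse[of f] by simp
next
  case (Suc n)
  have "Ck n S (dirderiv v (\<lambda>q. inverse (f q)))" for v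
  proof (rule Ck_transfer[OF assms(1)])
    have "Ck n S (\<lambda>q. inverse (f q))" using Suc Ck_mono by blast
    then show "Ck n S (\<lambda>q. - (dirderiv v f q * (inverse (f q) * inverse (f q))))"
      using Suc by (intro Ck_minus[OF assms(1)] Ck_mult[OF assms(1)]) auto
    show "- (dirderiv v f q * (inverse (f q) * inverse (f q))) = dirderiv v (\<lambda>q. inverse (f q)) q"
      if q: "q \<in> S" for q
    proof -
      have d: "f differentiable at q" using Suc.prems q by auto
      have "((\<lambda>q. inverse (f q)) has_derivative
          (\<lambda>h. - (inverse (f q) * frechet_derivative f (at q) h * inverse (f q)))) (at q)"
        by (rule Deriv.has_derivative_inverse[OF assms(3)[OF q] fd_at[OF d]])
      from frechet_derivative_at[OF this] show ?thesis
        unfolding dirderiv_def by (metis (no_types, lifting) mult.commute mult.left_commute)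
    qed
  qed
  moreover have "\<forall>p\<in>S. (\<lambda>q. inverse (f q)) differentiable at p"
    using Suc.prems assms(3) differentiable_inverse[of f] by simp
  ultimately show ?case by simp
qed

lemma smooth_open: "smooth_on S f \<Longrightarrow> open S"
  by (simp add: smooth_on_def)

lemma smooth_diffble: "smooth_on S f \<Longrightarrow> p \<in> S \<Longrightarrow> f differentiable at p"
  using smooth_on_Ck Ck_diffble by blast

lemma smooth_const: "open S \<Longrightarrow> smooth_on S (\<lambda>q. c)"
  by (simp add: smooth_on_Ck Ck_const)

lemma smooth_add: "smooth_on S f \<Longrightarrow> smooth_on S h \<Longrightarrow> smooth_on S (\<lambda>q. f q + h q)"
  by (simp add: smooth_on_Ck Ck_add)

lemma smooth_diff: "smooth_on S f \<Longrightarrow> smooth_on S h \<Longrightarrow> smooth_on S (\<lambda>q. f q - h q)"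
  by (simp add: smooth_on_Ck Ck_diff)

lemma smooth_minus: "smooth_on S f \<Longrightarrow> smooth_on S (\<lambda>q. - f q)"
  by (simp add: smooth_on_Ck Ck_minus)

lemma smooth_mult: "smooth_on S f \<Longrightarrow> smooth_on S h \<Longrightarrow> smooth_on S (\<lambda>q. f q * h q)"
  by (simp add: smooth_on_Ck Ck_mult)

lemma smooth_sum: "open S \<Longrightarrow> finite A \<Longrightarrow> (\<And>i. i \<in> A \<Longrightarrow> smooth_on S (f i)) \<Longrightarrow>
    smooth_on S (\<lambda>q. \<Sum>i\<in>A. f i q)"
  by (simp add: smooth_on_Ck Ck_sum)

lemma smooth_prod: "open S \<Longrightarrow> finite A \<Longrightarrow> (\<And>i. i \<in> A \<Longrightarrow> smooth_on S (f i)) \<Longrightarrow>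
    smooth_on S (\<lambda>q. \<Prod>i\<in>A. f i q)"
  by (simp add: smooth_on_Ck Ck_prod)

lemma smooth_inverse: "smooth_on S f \<Longrightarrow> (\<And>q. q \<in> S \<Longrightarrow> f q \<noteq> 0) \<Longrightarrow>
    smooth_on S (\<lambda>q. inverse (f q))"
  by (simp add: smooth_on_Ck Ck_inverse)

lemma smooth_dirderiv: "smooth_on S f \<Longrightarrow> smooth_on S (dirderiv v f)"
  unfolding smooth_on_Ck by (metis Ck.simps(2))

lemma smooth_transfer: "smooth_on S f \<Longrightarrow> (\<And>q. q \<in> S \<Longrightarrow> f q = h q) \<Longrightarrow> smooth_on S h"
  unfolding smooth_on_Ck using Ck_transfer by blast


section \<open>Symmetry of second derivatives\<close>

lemma dirderiv_line:
  fixes f :: "'a::real_normed_vector \<Rightarrow> real"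
  assumes "f differentiable at (a + s *\<^sub>R u)"
  shows "((\<lambda>s. f (a + s *\<^sub>R u)) has_real_derivative dirderiv u f (a + s *\<^sub>R u)) (at s)"
proof -
  let ?F = "frechet_derivative f (at (a + s *\<^sub>R u))"
  have l: "linear ?F" using linear_frechet_derivative[OF assms] .
  have "((\<lambda>s. a + s *\<^sub>R u) has_derivative (\<lambda>h. h *\<^sub>R u)) (at s)"
    by (auto intro!: derivative_eq_intros)
  from has_derivative_compose[OF this fd_at[OF assms]]
  have "((\<lambda>s. f (a + s *\<^sub>R u)) has_derivative (\<lambda>h. ?F (h *\<^sub>R u))) (at s)" .
  moreover have "(\<lambda>h. ?F (h *\<^sub>R u)) = (\<lambda>h. dirderiv u f (a + s *\<^sub>R u) * h)"
    using l by (auto simp: dirderiv_def linear_scale)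
  ultimately show ?thesis by (simp add: has_field_derivative_def)
qed

lemma mvt2d:
  fixes f :: "'a::real_normed_vector \<Rightarrow> real"
  assumes h: "h > 0"
    and sq: "\<And>s t. 0 \<le> s \<Longrightarrow> s \<le> h \<Longrightarrow> 0 \<le> t \<Longrightarrow> t \<le> h \<Longrightarrow> p + s *\<^sub>R u + t *\<^sub>R v \<in> S"
    and d0: "\<And>q. q \<in> S \<Longrightarrow> f differentiable at q"
    and du: "\<And>q. q \<in> S \<Longrightarrow> dirderiv u f differentiable at q"
  shows "\<exists>\<xi> \<eta>. 0 < \<xi> \<and> \<xi> < h \<and> 0 < \<eta> \<and> \<eta> < h \<and>
     f (p + h *\<^sub>R u + h *\<^sub>R v) - f (p + h *\<^sub>R u) - f (p + h *\<^sub>R v) + f p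
       = h * h * dirderiv v (dirderiv u f) (p + \<xi> *\<^sub>R u + \<eta> *\<^sub>R v)"
proof -
  define \<psi> where "\<psi> s = f ((p + h *\<^sub>R v) + s *\<^sub>R u) - f (p + s *\<^sub>R u)" for s
  have "DERIV \<psi> s :> dirderiv u f ((p + h *\<^sub>R v) + s *\<^sub>R u) - dirderiv u f (p + s *\<^sub>R u)"
    if "0 \<le> s" "s \<le> h" for s
  proof -
    have i1: "(p + h *\<^sub>R v) + s *\<^sub>R u \<in> S" using sq[of s h] that h by (simp add: algebra_simps)
    have i2: "p + s *\<^sub>R u \<in> S" using sq[of s 0] that h by simp
    show ?thesis unfolding \<psi>_def
      by (intro derivative_intros dirderiv_line d0 i1 i2)
  qed
  from MVT2[OF h this] obtain \<xi> where \<xi>: "0 < \<xi>" "\<xi> < h"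
    and e1: "\<psi> h - \<psi> 0 = (h - 0) * (dirderiv u f ((p + h *\<^sub>R v) + \<xi> *\<^sub>R u) - dirderiv u f (p + \<xi> *\<^sub>R u))"
    by blast
  define chi where "chi t = dirderiv u f ((p + \<xi> *\<^sub>R u) + t *\<^sub>R v)" for t
  have "DERIV chi t :> dirderiv v (dirderiv u f) ((p + \<xi> *\<^sub>R u) + t *\<^sub>R v)"
    if "0 \<le> t" "t \<le> h" for t
  proof -
    have i1: "(p + \<xi> *\<^sub>R u) + t *\<^sub>R v \<in> S" using sq[of \<xi> t] that \<xi> by simp
    show ?thesis unfolding chi_def by (intro dirderiv_line du i1)
  qed
  from MVT2[OF h this] obtain \<eta> where \<eta>: "0 < \<eta>" "\<eta> < h"
    and e2: "chi h - chi 0 = (h - 0) * dirderiv v (dirderiv u f) ((p + \<xi> *\<^sub>R u) + \<eta> *\<^sub>R v)"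
    by blast
  have "f (p + h *\<^sub>R u + h *\<^sub>R v) - f (p + h *\<^sub>R u) - f (p + h *\<^sub>R v) + f p = \<psi> h - \<psi> 0"
    unfolding \<psi>_def by (simp add: algebra_simps)
  also have "\<dots> = h * (chi h - chi 0)"
    using e1 unfolding chi_def by (simp add: algebra_simps)
  also have "\<dots> = h * h * dirderiv v (dirderiv u f) (p + \<xi> *\<^sub>R u + \<eta> *\<^sub>R v)"
    using e2 by simp
  finally show ?thesis using \<xi> \<eta> by blast
qed

lemma schwarz:
  fixes f :: "'a::real_normed_vector \<Rightarrow> real"
  assumes S: "open S" "p \<in> S"
    and d0: "\<And>q. q \<in> S \<Longrightarrow> f differentiable at q"
    and du: "\<And>q. q \<in> S \<Longrightarrow> dirderiv u f differentiable at q"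
    and dv: "\<And>q. q \<in> S \<Longrightarrow> dirderiv v f differentiable at q"
    and cuv: "isCont (dirderiv u (dirderiv v f)) p"
    and cvu: "isCont (dirderiv v (dirderiv u f)) p"
  shows "dirderiv u (dirderiv v f) p = dirderiv v (dirderiv u f) p"
proof (rule ccontr)
  let ?A = "dirderiv v (dirderiv u f)" and ?B = "dirderiv u (dirderiv v f)"
  assume ne: "?B p \<noteq> ?A p"
  define e where "e = \<bar>?A p - ?B p\<bar> / 3"
  have e: "e > 0" using ne by (simp add: e_def)
  obtain d1 where d1: "d1 > 0" "\<And>x. dist x p < d1 \<Longrightarrow> dist (?A x) (?A p) < e"
    using cvu e unfolding continuous_at_eps_delta by blast
  obtain d2 where d2: "d2 > 0" "\<And>x. dist x p < d2 \<Longrightarrow> dist (?B x) (?B p) < e"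
    using cuv e unfolding continuous_at_eps_delta by blast
  obtain r where r: "r > 0" "ball p r \<subseteq> S" using S openE by blast
  define D where "D = min r (min d1 d2)"
  have D: "D > 0" using r d1 d2 by (simp add: D_def)
  define h where "h = D / (2 * (norm u + norm v + 1))"
  have pos: "0 < 2 * (norm u + norm v + 1)" by (smt (verit) norm_ge_zero)
  have h: "h > 0" using D pos unfolding h_def by (rule divide_pos_pos)
  have hD: "h * (norm u + norm v) < D"
  proof -
    have "h * (norm u + norm v) \<le> h * (norm u + norm v + 1)" using h by simp
    also have "\<dots> = D / 2" unfolding h_def using pos by (simp add: field_simps)
    finally show ?thesis using D by simp
  qed
  have close: "dist (p + s *\<^sub>R u + t *\<^sub>R v) p < D" if "0 \<le> s" "s \<le> h" "0 \<le> t" "t \<le> h" for s t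
  proof -
    have "dist (p + s *\<^sub>R u + t *\<^sub>R v) p = norm (s *\<^sub>R u + t *\<^sub>R v)" by (simp add: dist_norm)
    also have "\<dots> \<le> s * norm u + t * norm v"
      using that norm_triangle_ineq[of "s *\<^sub>R u" "t *\<^sub>R v"] by simp
    also have "\<dots> \<le> h * norm u + h * norm v"
      using that by (intro add_mono mult_right_mono) auto
    finally show ?thesis using hD by (simp add: algebra_simps)
  qed
  have sq: "p + s *\<^sub>R u + t *\<^sub>R v \<in> S" if "0 \<le> s" "s \<le> h" "0 \<le> t" "t \<le> h" for s t
    using close[OF that] r unfolding D_def by (auto simp: dist_commute)
  have sq': "p + s *\<^sub>R v + t *\<^sub>R u \<in> S" if "0 \<le> s" "s \<le> h" "0 \<le> t" "t \<le> h" for s t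
    using sq[of t s] that by (simp add: algebra_simps)
  obtain \<xi> \<eta> where 1: "0 < \<xi>" "\<xi> < h" "0 < \<eta>" "\<eta> < h"
    "f (p + h *\<^sub>R u + h *\<^sub>R v) - f (p + h *\<^sub>R u) - f (p + h *\<^sub>R v) + f p
       = h * h * ?A (p + \<xi> *\<^sub>R u + \<eta> *\<^sub>R v)"
    using mvt2d[OF h sq d0 du] by blast
  obtain \<xi>' \<eta>' where 2: "0 < \<xi>'" "\<xi>' < h" "0 < \<eta>'" "\<eta>' < h"
    "f (p + h *\<^sub>R v + h *\<^sub>R u) - f (p + h *\<^sub>R v) - f (p + h *\<^sub>R u) + f p
       = h * h * ?B (p + \<xi>' *\<^sub>R v + \<eta>' *\<^sub>R u)"
    using mvt2d[OF h sq' d0 dv] by blast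
  have eq: "?A (p + \<xi> *\<^sub>R u + \<eta> *\<^sub>R v) = ?B (p + \<xi>' *\<^sub>R v + \<eta>' *\<^sub>R u)"
    using 1(5) 2(5) h by (simp add: algebra_simps)
  have a: "dist (?A (p + \<xi> *\<^sub>R u + \<eta> *\<^sub>R v)) (?A p) < e"
    using d1(2) close[of \<xi> \<eta>] 1 unfolding D_def by simp
  have b: "dist (?B (p + \<xi>' *\<^sub>R v + \<eta>' *\<^sub>R u)) (?B p) < e"
    using d2(2) close[of \<eta>' \<xi>'] 2 unfolding D_def by (simp add: algebra_simps)
  have "\<bar>?A p - ?B p\<bar> < 2 * e" using a b eq by (simp add: dist_real_def)
  then show False using e unfolding e_def by simp
qed

lemma schwarz_smooth:
  assumes "smooth_on S f" "p \<in> S"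
  shows "dirderiv u (dirderiv v f) p = dirderiv v (dirderiv u f) p"
proof (rule schwarz[OF smooth_open[OF assms(1)] assms(2)])
  show "\<And>q. q \<in> S \<Longrightarrow> f differentiable at q" using assms smooth_diffble by blast
  show "\<And>q. q \<in> S \<Longrightarrow> dirderiv u f differentiable at q"
    using smooth_diffble smooth_dirderiv assms by blast
  show "\<And>q. q \<in> S \<Longrightarrow> dirderiv v f differentiable at q"
    using smooth_diffble smooth_dirderiv assms by blast
  show "isCont (dirderiv u (dirderiv v f)) p" "isCont (dirderiv v (dirderiv u f)) p"
    using smooth_diffble[OF smooth_dirderiv[OF smooth_dirderiv[OF assms(1)]] assms(2)]
    by (auto intro: differentiable_imp_continuous_within)
qed


definition ev :: "'n::finite option \<Rightarrow> 'n pt" where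
  "ev a = (case a of None \<Rightarrow> (0, 1) | Some i \<Rightarrow> (axis i 1, 0))"

lemma dtil_eq: "dtil a f p = dirderiv (ev a) f p"
  by (cases a) (auto simp: dtil_def dt_def dx_def ev_def)

lemma dtil_fun: "dtil a f = dirderiv (ev a) f"
  by (rule ext) (rule dtil_eq)

lemma dx_dtil: "dx i = dtil (Some i)"
  by (auto simp: dtil_def fun_eq_iff)

lemma dt_dtil: "dt = dtil None"
  by (auto simp: dtil_def fun_eq_iff)

lemma dtil_const [simp]: "dtil a (\<lambda>q. c) p = 0"
  by (simp add: dtil_eq)

lemma dtil_local: "open S \<Longrightarrow> p \<in> S \<Longrightarrow> (\<And>q. q \<in> S \<Longrightarrow> f q = h q) \<Longrightarrow> dtil a f p = dtil a h p"
  unfolding dtil_eq by (rule dirderiv_local)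

lemma dtil_shift: "dtil a (\<lambda>q. f (q + c)) p = dtil a f (p + c)"
  unfolding dtil_eq by (rule dirderiv_shift)

lemma dtil_add: "f differentiable at p \<Longrightarrow> h differentiable at p \<Longrightarrow>
    dtil a (\<lambda>q. f q + h q) p = dtil a f p + dtil a h p"
  unfolding dtil_eq by (rule dirderiv_add)

lemma dtil_diff: "f differentiable at p \<Longrightarrow> h differentiable at p \<Longrightarrow>
    dtil a (\<lambda>q. f q - h q) p = dtil a f p - dtil a h p"
  unfolding dtil_eq by (rule dirderiv_diff)

lemma dtil_minus: "f differentiable at p \<Longrightarrow> dtil a (\<lambda>q. - f q) p = - dtil a f p"
  unfolding dtil_eq by (rule dirderiv_minus)

lemma dtil_mult: "f differentiable at p \<Longrightarrow> h differentiable at p \<Longrightarrow>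
    dtil a (\<lambda>q. f q * h q) p = dtil a f p * h p + f p * dtil a h p"
  unfolding dtil_eq by (rule dirderiv_mult)

lemma dtil_cmult: "f differentiable at p \<Longrightarrow> dtil a (\<lambda>q. c * f q) p = c * dtil a f p"
  unfolding dtil_eq by (rule dirderiv_cmult)

lemma dtil_sum: "finite A \<Longrightarrow> (\<And>i. i \<in> A \<Longrightarrow> f i differentiable at p) \<Longrightarrow>
    dtil a (\<lambda>q. \<Sum>i\<in>A. f i q) p = (\<Sum>i\<in>A. dtil a (f i) p)"
  unfolding dtil_eq by (rule dirderiv_sum)

lemma smooth_dtil: "smooth_on S f \<Longrightarrow> smooth_on S (dtil a f)"
  unfolding dtil_fun by (rule smooth_dirderiv)

lemma schwarz_dtil: "smooth_on S f \<Longrightarrow> p \<in> S \<Longrightarrow> dtil a (dtil b f) p = dtil b (dtil a f) p"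
  unfolding dtil_fun by (rule schwarz_smooth)

lemma smooth_if: "smooth_on S f \<Longrightarrow> smooth_on S h \<Longrightarrow> smooth_on S (\<lambda>q. if P then f q else h q)"
  by (cases P) auto

lemma smooth_det:
  fixes F :: "'n::finite \<Rightarrow> 'n \<Rightarrow> 'a::real_normed_vector \<Rightarrow> real"
  assumes "open S" "\<And>i j. smooth_on S (F i j)"
  shows "smooth_on S (\<lambda>q. det (\<chi> i j. F i j q))"
  unfolding det_def
  by (auto intro!: smooth_sum smooth_mult smooth_prod smooth_const assms)

lemma sum_delta_mult1 [simp]: "(\<Sum>k::'n::finite\<in>UNIV. (if i = k then 1 else 0) * f k) = (f i :: real)"
  by (simp add: if_distrib if_distribR cong: if_cong)

lemma sum_delta_mult2 [simp]: "(\<Sum>k::'n::finite\<in>UNIV. f k * (if k = i then 1 else 0)) = (f i :: real)"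
  by (simp add: if_distrib if_distribR cong: if_cong)

lemma sum_delta_mult3 [simp]: "(\<Sum>k::'n::finite\<in>UNIV. (if k = i then 1 else 0) * f k) = (f i :: real)"
  by (simp add: if_distrib if_distribR cong: if_cong)

lemma sum_delta_mult4 [simp]: "(\<Sum>k::'n::finite\<in>UNIV. f k * (if i = k then 1 else 0)) = (f i :: real)"
  by (simp add: if_distrib if_distribR cong: if_cong)

locale RF =
  fixes \<Omega> :: "('n::finite) pt set" and g :: "'n \<Rightarrow> 'n \<Rightarrow> 'n pt \<Rightarrow> real"
  assumes opn: "open \<Omega>"
    and sm_g: "smooth_on \<Omega> (g i j)"
    and sym_g: "p \<in> \<Omega> \<Longrightarrow> g i j p = g j i p"
    and posdef: "p \<in> \<Omega> \<Longrightarrow> v \<noteq> 0 \<Longrightarrow> v \<bullet> (gmat g p *v v) > 0"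
    and flow: "p \<in> \<Omega> \<Longrightarrow> dt (g i j) p = -2 * Ric g i j p"
begin

abbreviation G where "G \<equiv> ginv g"

lemma sm_const: "smooth_on \<Omega> (\<lambda>q. c)"
  by (rule smooth_const[OF opn])

lemma det_nz: "p \<in> \<Omega> \<Longrightarrow> det (gmat g p) \<noteq> 0"
proof
  assume p: "p \<in> \<Omega>" and d: "det (gmat g p) = 0"
  have "\<not> inj ((*v) (gmat g p))"
    using det_nz_iff_inj[of "(*v) (gmat g p)"] d by (simp add: matrix_of_matrix_vector_mul)
  then obtain x y where xy: "x \<noteq> y" "gmat g p *v x = gmat g p *v y" unfolding inj_def by blast
  define v where "v = x - y"
  have "v \<noteq> 0" "gmat g p *v v = 0" using xy by (auto simp: v_def matrix_vector_mult_diff_distrib)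
  then show False using posdef[OF p, of v] by simp
qed

lemma invertible_g: "p \<in> \<Omega> \<Longrightarrow> invertible (gmat g p)"
  using det_nz invertible_det_nz by blast

lemma inv_props: "p \<in> \<Omega> \<Longrightarrow> gmat g p ** matrix_inv (gmat g p) = mat 1 \<and> matrix_inv (gmat g p) ** gmat g p = mat 1"
  using invertible_g[of p] unfolding invertible_def matrix_inv_def by (rule someI_ex)

lemma gG: "p \<in> \<Omega> \<Longrightarrow> (\<Sum>m\<in>UNIV. g i m p * G m j p) = (if i = j then 1 else 0)"
  using arg_cong[OF conjunct1[OF inv_props], of p "\<lambda>M. M $ i $ j"]
  by (simp add: matrix_matrix_mult_def mat_def gmat_def ginv_def)

lemma Gg: "p \<in> \<Omega> \<Longrightarrow> (\<Sum>m\<in>UNIV. G i m p * g m j p) = (if i = j then 1 else 0)"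
  using arg_cong[OF conjunct2[OF inv_props], of p "\<lambda>M. M $ i $ j"]
  by (simp add: matrix_matrix_mult_def mat_def gmat_def ginv_def)

lemma sym_G: "p \<in> \<Omega> \<Longrightarrow> G i j p = G j i p"
proof -
  assume p: "p \<in> \<Omega>"
  have d: "(\<Sum>a\<in>UNIV. G a i p * g a b p) = (if b = i then 1 else 0)" for b
    using gG[OF p, of b i] sym_g[OF p] by (simp add: mult.commute)
  have "G i j p = (\<Sum>b\<in>UNIV. (if b = i then 1 else 0) * G b j p)" by simp
  also have "\<dots> = (\<Sum>b\<in>UNIV. (\<Sum>a\<in>UNIV. G a i p * g a b p) * G b j p)"
    by (simp only: d)
  also have "\<dots> = (\<Sum>a\<in>UNIV. G a i p * (\<Sum>b\<in>UNIV. g a b p * G b j p))"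
    unfolding sum_distrib_left sum_distrib_right mult.assoc by (rule sum.swap)
  also have "\<dots> = G j i p" by (simp add: gG[OF p])
  finally show ?thesis .
qed

lemma ginv_cramer: "p \<in> \<Omega> \<Longrightarrow>
   G k j p = det (\<chi> r s. if s = k then (if r = j then 1 else 0) else g r s p) / det (gmat g p)"
proof -
  assume p: "p \<in> \<Omega>"
  let ?A = "gmat g p" and ?x = "matrix_inv (gmat g p) *v axis j 1"
  have "?A *v ?x = axis j 1"
    using inv_props[OF p] by (simp add: matrix_vector_mul_assoc)
  then have "?x = (\<chi> k. det (\<chi> i l. if l = k then (axis j 1 :: real^'n) $ i else ?A $ i $ l) / det ?A)"
    using cramer[OF det_nz[OF p]] by blast
  then have "?x $ k = det (\<chi> i l. if l = k then (axis j 1 :: real^'n) $ i else ?A $ i $ l) / det ?A"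
    by simp
  moreover have "?x $ k = G k j p"
    by (simp add: matrix_vector_mult_def ginv_def axis_def if_distrib cong: if_cong)
  moreover have "(\<chi> i l. if l = k then (axis j 1 :: real^'n) $ i else ?A $ i $ l) =
      (\<chi> r s. if s = k then (if r = j then 1 else 0) else g r s p)"
    by (simp add: vec_eq_iff axis_def gmat_def)
  ultimately show ?thesis by simp
qed

lemma sm_G: "smooth_on \<Omega> (G k j)"
proof (rule smooth_transfer)
  show "smooth_on \<Omega> (\<lambda>q. det (\<chi> r s. if s = k then (if r = j then 1 else 0) else g r s q) *
     inverse (det (gmat g q)))"
  proof (rule smooth_mult)
    show "smooth_on \<Omega> (\<lambda>q. det (\<chi> r s. if s = k then (if r = j then 1 else 0) else g r s q))"
      by (rule smooth_det[OF opn]) (auto intro!: smooth_if sm_g sm_const)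
    show "smooth_on \<Omega> (\<lambda>q. inverse (det (gmat g q)))"
      unfolding gmat_def
      by (rule smooth_inverse, rule smooth_det[OF opn sm_g]) (use det_nz in \<open>auto simp: gmat_def\<close>)
  qed
  show "\<And>q. q \<in> \<Omega> \<Longrightarrow> det (\<chi> r s. if s = k then (if r = j then 1 else 0) else g r s q) *
     inverse (det (gmat g q)) = G k j q"
    by (simp add: ginv_cramer divide_inverse)
qed

end


lemma sum_swap_r: "(\<Sum>b\<in>UNIV. (\<Sum>a\<in>UNIV. X a b) * (Y b::real)) = (\<Sum>a\<in>UNIV. \<Sum>b\<in>UNIV. X a b * Y b)"
  unfolding sum_distrib_right by (rule sum.swap)

lemma sum_swap_l: "(\<Sum>b\<in>UNIV. (Y b::real) * (\<Sum>a\<in>UNIV. X a b)) = (\<Sum>a\<in>UNIV. \<Sum>b\<in>UNIV. Y b * X a b)"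
  unfolding sum_distrib_left by (rule sum.swap)

context RF
begin

abbreviation Gam where "Gam \<equiv> christoffel g"

lemma diffble: "smooth_on \<Omega> f \<Longrightarrow> p \<in> \<Omega> \<Longrightarrow> f differentiable at p"
  by (rule smooth_diffble)

lemma sm_dg: "smooth_on \<Omega> (dtil a (g i j))"
  by (rule smooth_dtil[OF sm_g])

lemma dG: assumes p: "p \<in> \<Omega>"
  shows "dtil a (G i j) p = - (\<Sum>k\<in>UNIV. \<Sum>l\<in>UNIV. G i k p * dtil a (g k l) p * G l j p)"
proof -
  have z: "(\<Sum>m\<in>UNIV. dtil a (g k m) p * G m j p + g k m p * dtil a (G m j) p) = 0" for k
  proof -
    have "dtil a (\<lambda>q. \<Sum>m\<in>UNIV. g k m q * G m j q) p = dtil a (\<lambda>q. if k = j then 1 else 0) p"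
      by (rule dtil_local[OF opn p]) (simp add: gG)
    also have "\<dots> = 0" by simp
    finally show ?thesis
      using p by (simp add: dtil_sum dtil_mult diffble sm_g sm_G smooth_mult)
  qed
  have "dtil a (G i j) p = (\<Sum>m\<in>UNIV. (if i = m then 1 else 0) * dtil a (G m j) p)" by simp
  also have "\<dots> = (\<Sum>m\<in>UNIV. (\<Sum>k\<in>UNIV. G i k p * g k m p) * dtil a (G m j) p)"
    by (simp only: Gg[OF p])
  also have "\<dots> = (\<Sum>k\<in>UNIV. G i k p * (\<Sum>m\<in>UNIV. g k m p * dtil a (G m j) p))"
    by (simp add: sum_swap_r sum_distrib_left mult.assoc)
  also have "\<dots> = (\<Sum>k\<in>UNIV. G i k p * (- (\<Sum>m\<in>UNIV. dtil a (g k m) p * G m j p)))"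
  proof (rule sum.cong[OF refl])
    fix k
    have "(\<Sum>m\<in>UNIV. g k m p * dtil a (G m j) p) = - (\<Sum>m\<in>UNIV. dtil a (g k m) p * G m j p)"
      using z[of k] by (simp add: sum.distrib eq_neg_iff_add_eq_0 add.commute)
    then show "G i k p * (\<Sum>m\<in>UNIV. g k m p * dtil a (G m j) p) =
      G i k p * (- (\<Sum>m\<in>UNIV. dtil a (g k m) p * G m j p))" by simp
  qed
  also have "\<dots> = - (\<Sum>k\<in>UNIV. \<Sum>l\<in>UNIV. G i k p * dtil a (g k l) p * G l j p)"
    by (simp add: sum_distrib_left sum_negf mult.assoc)
  finally show ?thesis .
qed

lemma dg_sym: "p \<in> \<Omega> \<Longrightarrow> dtil a (g i j) p = dtil a (g j i) p"
  by (rule dtil_local[OF opn]) (auto intro: sym_g)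

lemma Gam_def': "Gam i j k p = 1/2 * (\<Sum>l\<in>UNIV. G k l p *
      (dtil (Some i) (g j l) p + dtil (Some j) (g i l) p - dtil (Some l) (g i j) p))"
  by (simp add: christoffel_def dx_dtil)

lemma sm_Gam: "smooth_on \<Omega> (Gam i j k)"
  unfolding christoffel_def dx_dtil
  by (intro smooth_mult smooth_sum smooth_add smooth_diff sm_const sm_G sm_dg opn) auto

lemma Gam_sym: "p \<in> \<Omega> \<Longrightarrow> Gam i j k p = Gam j i k p"
  unfolding Gam_def' by (simp add: dg_sym[of p _ i j] algebra_simps)

lemma Gam_lower: assumes p: "p \<in> \<Omega>"
  shows "(\<Sum>m\<in>UNIV. Gam a b m p * g m c p) =
     1/2 * (dtil (Some a) (g b c) p + dtil (Some b) (g a c) p - dtil (Some c) (g a b) p)"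
proof -
  let ?X = "\<lambda>l. dtil (Some a) (g b l) p + dtil (Some b) (g a l) p - dtil (Some l) (g a b) p"
  have "(\<Sum>m\<in>UNIV. Gam a b m p * g m c p) = (\<Sum>m\<in>UNIV. (1/2 * (\<Sum>l\<in>UNIV. G m l p * ?X l)) * g m c p)"
    unfolding Gam_def' ..
  also have "\<dots> = (\<Sum>m\<in>UNIV. \<Sum>l\<in>UNIV. 1/2 * (g c m p * G m l p * ?X l))"
    by (simp add: sum_distrib_left sum_distrib_right sym_g[OF p, of _ c] mult_ac)
  also have "\<dots> = (\<Sum>l\<in>UNIV. \<Sum>m\<in>UNIV. 1/2 * (g c m p * G m l p * ?X l))"
    by (rule sum.swap)
  also have "\<dots> = 1/2 * (\<Sum>l\<in>UNIV. (\<Sum>m\<in>UNIV. g c m p * G m l p) * ?X l)"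
    by (simp add: sum_distrib_left sum_distrib_right)
  also have "\<dots> = 1/2 * ?X c" by (simp add: gG[OF p])
  finally show ?thesis .
qed

lemma compat_lower: assumes p: "p \<in> \<Omega>"
  shows "dtil (Some a) (g b c) p = (\<Sum>m\<in>UNIV. Gam a b m p * g m c p) + (\<Sum>m\<in>UNIV. Gam a c m p * g b m p)"
proof -
  have "(\<Sum>m\<in>UNIV. Gam a c m p * g b m p) = (\<Sum>m\<in>UNIV. Gam a c m p * g m b p)"
    using sym_g[OF p] by simp
  also have "\<dots> = 1/2 * (dtil (Some a) (g c b) p + dtil (Some c) (g a b) p - dtil (Some b) (g a c) p)"
    by (rule Gam_lower[OF p])
  finally have 2: "(\<Sum>m\<in>UNIV. Gam a c m p * g b m p) = \<dots>" .
  have 3: "dtil (Some a) (g c b) p = dtil (Some a) (g b c) p" by (rule dg_sym[OF p])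
  show ?thesis unfolding 2 Gam_lower[OF p] 3 by (simp add: algebra_simps)
qed

lemma compat_upper: assumes p: "p \<in> \<Omega>"
  shows "dtil (Some a) (G b c) p = - (\<Sum>m\<in>UNIV. Gam a m b p * G m c p) - (\<Sum>m\<in>UNIV. Gam a m c p * G b m p)"
proof -
  have "dtil (Some a) (G b c) p = - (\<Sum>k\<in>UNIV. \<Sum>l\<in>UNIV. G b k p *
      ((\<Sum>m\<in>UNIV. Gam a k m p * g m l p) + (\<Sum>m\<in>UNIV. Gam a l m p * g k m p)) * G l c p)"
    by (simp add: dG[OF p] compat_lower[OF p])
  also have "\<dots> = - (\<Sum>k\<in>UNIV. \<Sum>l\<in>UNIV. \<Sum>m\<in>UNIV. G b k p * Gam a k m p * g m l p * G l c p)
                  - (\<Sum>k\<in>UNIV. \<Sum>l\<in>UNIV. \<Sum>m\<in>UNIV. G b k p * Gam a l m p * g k m p * G l c p)"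
    by (simp add: algebra_simps sum_distrib_left sum_distrib_right sum.distrib sum_subtractf)
  also have "(\<Sum>k\<in>UNIV. \<Sum>l\<in>UNIV. \<Sum>m\<in>UNIV. G b k p * Gam a k m p * g m l p * G l c p)
      = (\<Sum>k\<in>UNIV. \<Sum>m\<in>UNIV. G b k p * Gam a k m p * (\<Sum>l\<in>UNIV. g m l p * G l c p))"
    apply (simp add: sum_distrib_left mult.assoc)
    apply (rule sum.cong[OF refl]) apply (subst sum.swap) by simp
  also have "\<dots> = (\<Sum>m\<in>UNIV. Gam a m c p * G b m p)"
    by (simp add: gG[OF p] Gam_sym[OF p, of a] mult.commute)
  also have "(\<Sum>k\<in>UNIV. \<Sum>l\<in>UNIV. \<Sum>m\<in>UNIV. G b k p * Gam a l m p * g k m p * G l c p)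
      = (\<Sum>l\<in>UNIV. \<Sum>m\<in>UNIV. (\<Sum>k\<in>UNIV. G b k p * g k m p) * Gam a l m p * G l c p)"
  proof -
    have "(\<Sum>k\<in>UNIV. \<Sum>l\<in>UNIV. \<Sum>m\<in>UNIV. G b k p * Gam a l m p * g k m p * G l c p)
      = (\<Sum>l\<in>UNIV. \<Sum>k\<in>UNIV. \<Sum>m\<in>UNIV. G b k p * Gam a l m p * g k m p * G l c p)"
      by (rule sum.swap)
    also have "\<dots> = (\<Sum>l\<in>UNIV. \<Sum>m\<in>UNIV. \<Sum>k\<in>UNIV. G b k p * Gam a l m p * g k m p * G l c p)"
      by (rule sum.cong[OF refl], rule sum.swap)
    also have "\<dots> = (\<Sum>l\<in>UNIV. \<Sum>m\<in>UNIV. (\<Sum>k\<in>UNIV. G b k p * g k m p) * Gam a l m p * G l c p)"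
      by (simp add: sum_distrib_right sum_distrib_left mult_ac)
    finally show ?thesis .
  qed
  also have "\<dots> = (\<Sum>m\<in>UNIV. Gam a m b p * G m c p)"
    by (simp add: Gg[OF p] Gam_sym[OF p, of a] mult.assoc)
  finally show ?thesis by simp
qed

end

section \<open>Algebraic second Bianchi identity\<close>

definition RmA :: "('i::finite \<Rightarrow> 'i \<Rightarrow> 'i \<Rightarrow> real) \<Rightarrow> ('i \<Rightarrow> 'i \<Rightarrow> 'i \<Rightarrow> 'i \<Rightarrow> real) \<Rightarrow> 'i \<Rightarrow> 'i \<Rightarrow> 'i \<Rightarrow> 'i \<Rightarrow> real" where
  "RmA C dC b c d e = dC b c d e - dC c b d e + (\<Sum>m\<in>UNIV. C c d m * C b m e - C b d m * C c m e)"

definition dRmA :: "('i::finite \<Rightarrow> 'i \<Rightarrow> 'i \<Rightarrow> real) \<Rightarrow> ('i \<Rightarrow> 'i \<Rightarrow> 'i \<Rightarrow> 'i \<Rightarrow> real)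
   \<Rightarrow> ('i \<Rightarrow> 'i \<Rightarrow> 'i \<Rightarrow> 'i \<Rightarrow> 'i \<Rightarrow> real) \<Rightarrow> 'i \<Rightarrow> 'i \<Rightarrow> 'i \<Rightarrow> 'i \<Rightarrow> 'i \<Rightarrow> real" where
  "dRmA C dC ddC a b c d e = ddC a b c d e - ddC a c b d e +
     (\<Sum>m\<in>UNIV. dC a c d m * C b m e + C c d m * dC a b m e - dC a b d m * C c m e - C b d m * dC a c m e)"

definition nabA where
  "nabA C dC ddC a b c d e = dRmA C dC ddC a b c d e
     - (\<Sum>m\<in>UNIV. C a b m * RmA C dC m c d e) - (\<Sum>m\<in>UNIV. C a c m * RmA C dC b m d e)
     - (\<Sum>m\<in>UNIV. C a d m * RmA C dC b c m e) + (\<Sum>m\<in>UNIV. C a m e * RmA C dC b c d m)"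

definition F1 where
  "F1 C dC a b c d e m = dC a c d m * C b m e + C c d m * dC a b m e - dC a b d m * C c m e - C b d m * dC a c m e
        - C a b m * (dC m c d e - dC c m d e) - C a c m * (dC b m d e - dC m b d e)
        - C a d m * (dC b c m e - dC c b m e) + C a m e * (dC b c d m - dC c b d m)"

definition F2 where
  "F2 C a b c d e m n = - (C a b m * (C c d n * C m n e - C m d n * C c n e))
        - C a c m * (C m d n * C b n e - C b d n * C m n e)
        - C a d m * (C c m n * C b n e - C b m n * C c n e)
        + C a m e * (C c d n * C b n m - C b d n * C c n m)"

lemma nabA_expand:
  "nabA C dC ddC a b c d e = (ddC a b c d e - ddC a c b d e) + (\<Sum>m\<in>UNIV. F1 C dC a b c d e m)
     + (\<Sum>m\<in>UNIV. \<Sum>n\<in>UNIV. F2 C a b c d e m n)"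
  unfolding nabA_def dRmA_def RmA_def F1_def F2_def
  by (simp add: algebra_simps sum.distrib sum_subtractf sum_distrib_left sum_negf)

lemma double_sum_antisym:
  fixes Y :: "'i::finite \<Rightarrow> 'i \<Rightarrow> real"
  assumes "\<And>m n. Y m n + Y n m = 0"
  shows "(\<Sum>m\<in>UNIV. \<Sum>n\<in>UNIV. Y m n) = 0"
proof -
  have "(\<Sum>m\<in>UNIV. \<Sum>n\<in>UNIV. Y m n) = (\<Sum>m\<in>UNIV. \<Sum>n\<in>UNIV. Y n m)"
    by (rule sum.swap)
  then have "2 * (\<Sum>m\<in>UNIV. \<Sum>n\<in>UNIV. Y m n) = (\<Sum>m\<in>UNIV. \<Sum>n\<in>UNIV. Y m n + Y n m)"
    by (simp add: sum.distrib)
  also have "\<dots> = 0" using assms by simp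
  finally show ?thesis by simp
qed

lemma bianchi_alg:
  assumes sC: "\<And>i j k. C i j k = C j i k"
    and sdC: "\<And>a i j k. dC a i j k = dC a j i k"
    and sdd: "\<And>a b i j k. ddC a b i j k = ddC b a i j k"
  shows "nabA C dC ddC a b c d e + nabA C dC ddC b c a d e + nabA C dC ddC c a b d e = 0"
proof -
  have 0: "(ddC a b c d e - ddC a c b d e) + (ddC b c a d e - ddC b a c d e) + (ddC c a b d e - ddC c b a d e) = 0"
    using sdd[of a b] sdd[of a c] sdd[of b c] by simp
  have 1: "F1 C dC a b c d e m + F1 C dC b c a d e m + F1 C dC c a b d e m = 0" for m
    unfolding F1_def by (simp add: sC sdC algebra_simps)
  have 2: "(\<Sum>m\<in>UNIV. \<Sum>n\<in>UNIV. F2 C a b c d e m n + F2 C b c a d e m n + F2 C c a b d e m n) = 0"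
    by (rule double_sum_antisym) (simp add: F2_def sC algebra_simps)
  have "nabA C dC ddC a b c d e + nabA C dC ddC b c a d e + nabA C dC ddC c a b d e
    = ((ddC a b c d e - ddC a c b d e) + (ddC b c a d e - ddC b a c d e) + (ddC c a b d e - ddC c b a d e))
      + (\<Sum>m\<in>UNIV. F1 C dC a b c d e m + F1 C dC b c a d e m + F1 C dC c a b d e m)
      + (\<Sum>m\<in>UNIV. \<Sum>n\<in>UNIV. F2 C a b c d e m n + F2 C b c a d e m n + F2 C c a b d e m n)"
    unfolding nabA_expand by (simp add: sum.distrib algebra_simps)
  also have "\<dots> = 0" unfolding 0 1 2 by simp
  finally show ?thesis .
qed


lemma sum3_23: "(\<Sum>a\<in>A. \<Sum>b\<in>B. \<Sum>c\<in>C. F a b c) = (\<Sum>a\<in>A. \<Sum>c\<in>C. \<Sum>b\<in>B. F a b c)"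
  by (rule sum.cong[OF refl], rule sum.swap)

definition dGiA :: "('i::finite \<Rightarrow> 'i \<Rightarrow> 'i \<Rightarrow> real) \<Rightarrow> ('i \<Rightarrow> 'i \<Rightarrow> real) \<Rightarrow> 'i \<Rightarrow> 'i \<Rightarrow> 'i \<Rightarrow> real" where
  "dGiA C Gi a b c = - (\<Sum>m\<in>UNIV. C a m b * Gi m c) - (\<Sum>m\<in>UNIV. C a m c * Gi b m)"

definition nab2A :: "('i::finite \<Rightarrow> 'i \<Rightarrow> 'i \<Rightarrow> real) \<Rightarrow> ('i \<Rightarrow> 'i \<Rightarrow> real) \<Rightarrow> ('i \<Rightarrow> 'i \<Rightarrow> 'i \<Rightarrow> real) \<Rightarrow> 'i \<Rightarrow> 'i \<Rightarrow> 'i \<Rightarrow> real" where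
  "nab2A C X dX a i j = dX a i j - (\<Sum>m\<in>UNIV. C a i m * X m j) - (\<Sum>m\<in>UNIV. C a j m * X i m)"

lemma contr_trace:
  fixes C :: "'i::finite \<Rightarrow> 'i \<Rightarrow> 'i \<Rightarrow> real"
  shows "(\<Sum>b\<in>UNIV. \<Sum>d\<in>UNIV. Gi b d * nab2A C X dX c b d)
     = (\<Sum>b\<in>UNIV. \<Sum>d\<in>UNIV. dGiA C Gi c b d * X b d + Gi b d * dX c b d)"
proof -
  have L: "(\<Sum>b\<in>UNIV. \<Sum>d\<in>UNIV. Gi b d * nab2A C X dX c b d)
     = (\<Sum>b\<in>UNIV. \<Sum>d\<in>UNIV. Gi b d * dX c b d)
       - (\<Sum>b\<in>UNIV. \<Sum>d\<in>UNIV. \<Sum>m\<in>UNIV. Gi b d * C c b m * X m d)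
       - (\<Sum>b\<in>UNIV. \<Sum>d\<in>UNIV. \<Sum>m\<in>UNIV. Gi b d * C c d m * X b m)"
    unfolding nab2A_def by (simp add: algebra_simps sum_subtractf sum_distrib_left sum.distrib)
  have R: "(\<Sum>b\<in>UNIV. \<Sum>d\<in>UNIV. dGiA C Gi c b d * X b d + Gi b d * dX c b d)
     = (\<Sum>b\<in>UNIV. \<Sum>d\<in>UNIV. Gi b d * dX c b d)
       - (\<Sum>b\<in>UNIV. \<Sum>d\<in>UNIV. \<Sum>m\<in>UNIV. C c m b * Gi m d * X b d)
       - (\<Sum>b\<in>UNIV. \<Sum>d\<in>UNIV. \<Sum>m\<in>UNIV. C c m d * Gi b m * X b d)"
    unfolding dGiA_def by (simp add: algebra_simps sum_subtractf sum_distrib_left sum_distrib_right sum.distrib)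
  have 1: "(\<Sum>b\<in>UNIV. \<Sum>d\<in>UNIV. \<Sum>m\<in>UNIV. Gi b d * C c b m * X m d)
      = (\<Sum>b\<in>UNIV. \<Sum>d\<in>UNIV. \<Sum>m\<in>UNIV. C c m b * Gi m d * X b d)"
  proof -
    have "(\<Sum>b\<in>UNIV. \<Sum>d\<in>UNIV. \<Sum>m\<in>UNIV. Gi b d * C c b m * X m d)
        = (\<Sum>b\<in>UNIV. \<Sum>m\<in>UNIV. \<Sum>d\<in>UNIV. Gi b d * C c b m * X m d)" by (rule sum3_23)
    also have "\<dots> = (\<Sum>m\<in>UNIV. \<Sum>b\<in>UNIV. \<Sum>d\<in>UNIV. Gi b d * C c b m * X m d)" by (rule sum.swap)
    also have "\<dots> = (\<Sum>m\<in>UNIV. \<Sum>d\<in>UNIV. \<Sum>b\<in>UNIV. Gi b d * C c b m * X m d)" by (rule sum3_23)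
    finally show ?thesis by (simp add: mult_ac)
  qed
  have 2: "(\<Sum>b\<in>UNIV. \<Sum>d\<in>UNIV. \<Sum>m\<in>UNIV. Gi b d * C c d m * X b m)
      = (\<Sum>b\<in>UNIV. \<Sum>d\<in>UNIV. \<Sum>m\<in>UNIV. C c m d * Gi b m * X b d)"
  proof -
    have "(\<Sum>b\<in>UNIV. \<Sum>d\<in>UNIV. \<Sum>m\<in>UNIV. Gi b d * C c d m * X b m)
        = (\<Sum>b\<in>UNIV. \<Sum>m\<in>UNIV. \<Sum>d\<in>UNIV. Gi b d * C c d m * X b m)" by (rule sum3_23)
    then show ?thesis by (simp add: mult_ac)
  qed
  show ?thesis unfolding L R 1 2 ..
qed

lemma sum4_tuple:
  fixes F :: "'i::finite \<Rightarrow> 'i \<Rightarrow> 'i \<Rightarrow> 'i \<Rightarrow> real"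
  shows "(\<Sum>a\<in>UNIV. \<Sum>b\<in>UNIV. \<Sum>c\<in>UNIV. \<Sum>d\<in>UNIV. F a b c d) = (\<Sum>(a,b,c,d)\<in>UNIV. F a b c d)"
proof -
  have "(\<Sum>a\<in>UNIV. \<Sum>b\<in>UNIV. \<Sum>c\<in>UNIV. \<Sum>d\<in>UNIV. F a b c d)
      = (\<Sum>a\<in>UNIV. \<Sum>b\<in>UNIV. \<Sum>(c,d)\<in>UNIV. F a b c d)"
    by (simp add: sum.cartesian_product)
  also have "\<dots> = (\<Sum>a\<in>UNIV. \<Sum>(b,c,d)\<in>UNIV. F a b c d)"
    by (simp add: sum.cartesian_product case_prod_beta)
  also have "\<dots> = (\<Sum>(a,b,c,d)\<in>UNIV. F a b c d)"
    by (simp add: sum.cartesian_product case_prod_beta)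
  finally show ?thesis .
qed

lemma sum3_tuple:
  fixes F :: "'i::finite \<Rightarrow> 'i \<Rightarrow> 'i \<Rightarrow> real"
  shows "(\<Sum>a\<in>UNIV. \<Sum>b\<in>UNIV. \<Sum>c\<in>UNIV. F a b c) = (\<Sum>(a,b,c)\<in>UNIV. F a b c)"
proof -
  have "(\<Sum>a\<in>UNIV. \<Sum>b\<in>UNIV. \<Sum>c\<in>UNIV. F a b c) = (\<Sum>a\<in>UNIV. \<Sum>(b,c)\<in>UNIV. F a b c)"
    by (simp add: sum.cartesian_product)
  also have "\<dots> = (\<Sum>(a,b,c)\<in>UNIV. F a b c)"
    by (simp add: sum.cartesian_product case_prod_beta)
  finally show ?thesis .
qed

definition RcA where "RcA C dC j k = (\<Sum>q\<in>UNIV. RmA C dC q j k q)"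
definition dRcA where "dRcA C dC ddC a j k = (\<Sum>q\<in>UNIV. dRmA C dC ddC a q j k q)"
definition RuX :: "('i::finite \<Rightarrow> 'i \<Rightarrow> real) \<Rightarrow> ('i \<Rightarrow> 'i \<Rightarrow> real) \<Rightarrow> 'i \<Rightarrow> 'i \<Rightarrow> real"
  where "RuX Gi X l k = (\<Sum>j\<in>UNIV. Gi k j * X l j)"
definition dRuX where "dRuX C Gi X dX a l k = (\<Sum>j\<in>UNIV. dGiA C Gi a k j * X l j + Gi k j * dX a l j)"
definition DivX where "DivX C Gi X dX l = (\<Sum>r\<in>UNIV. dRuX C Gi X dX r l r
    + (\<Sum>m\<in>UNIV. RuX Gi X l m * C r m r) - (\<Sum>m\<in>UNIV. RuX Gi X r m * C l m r))"
definition dtrX where "dtrX C Gi X dX c = (\<Sum>b\<in>UNIV. \<Sum>d\<in>UNIV. dGiA C Gi c b d * X b d + Gi b d * dX c b d)"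
definition QA where "QA C dC Gi c a = (\<Sum>b\<in>UNIV. \<Sum>d\<in>UNIV. Gi b d * RmA C dC b c d a)"
definition dQA where "dQA C dC ddC Gi a' c a = (\<Sum>b\<in>UNIV. \<Sum>d\<in>UNIV.
    dGiA C Gi a' b d * RmA C dC b c d a + Gi b d * dRmA C dC ddC a' b c d a)"

lemma nabA_contr:
  "(\<Sum>a\<in>UNIV. nabA C dC ddC x a y d a) = nab2A C (RcA C dC) (dRcA C dC ddC) x y d"
proof -
  have 1: "(\<Sum>a\<in>UNIV. \<Sum>m\<in>UNIV. C x a m * RmA C dC m y d a) = (\<Sum>a\<in>UNIV. \<Sum>m\<in>UNIV. C x m a * RmA C dC a y d m)"
    by (rule sum.swap)
  have 2: "(\<Sum>a\<in>UNIV. \<Sum>m\<in>UNIV. C x y m * RmA C dC a m d a) = (\<Sum>m\<in>UNIV. C x y m * RcA C dC m d)"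
    unfolding RcA_def sum_distrib_left by (rule sum.swap)
  have 3: "(\<Sum>a\<in>UNIV. \<Sum>m\<in>UNIV. C x d m * RmA C dC a y m a) = (\<Sum>m\<in>UNIV. C x d m * RcA C dC y m)"
    unfolding RcA_def sum_distrib_left by (rule sum.swap)
  show ?thesis
    unfolding nabA_def nab2A_def sum.distrib sum_subtractf 1 2 3 by (simp add: dRcA_def)
qed

lemma nabA_anti: "nabA C dC ddC x y z d e = - nabA C dC ddC x z y d e"
  unfolding nabA_def dRmA_def RmA_def
  by (simp add: algebra_simps sum.distrib sum_subtractf sum_distrib_left sum_negf)

lemma bianchi_contr:
  assumes sC: "\<And>i j k. C i j k = C j i k"
    and sdC: "\<And>a i j k. dC a i j k = dC a j i k"
    and sdd: "\<And>a b i j k. ddC a b i j k = ddC b a i j k"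
  shows "(\<Sum>a\<in>UNIV. nabA C dC ddC a b c d a)
    = nab2A C (RcA C dC) (dRcA C dC ddC) b c d - nab2A C (RcA C dC) (dRcA C dC ddC) c b d"
proof -
  have "(\<Sum>a\<in>UNIV. nabA C dC ddC a b c d a + nabA C dC ddC b c a d a + nabA C dC ddC c a b d a) = 0"
    using bianchi_alg[where C=C and dC=dC and ddC=ddC, OF sC sdC sdd] by simp
  moreover have "(\<Sum>a\<in>UNIV. nabA C dC ddC b c a d a) = - nab2A C (RcA C dC) (dRcA C dC ddC) b c d"
    using nabA_contr[of C dC ddC b c d] by (simp add: nabA_anti[of C dC ddC b c] sum_negf)
  ultimately show ?thesis
    using nabA_contr[of C dC ddC c b d] by (simp add: sum.distrib)
qed

lemma div_lemma:
  assumes sC: "\<And>i j k. C i j k = C j i k"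
  shows "(\<Sum>b\<in>UNIV. \<Sum>d\<in>UNIV. Gi b d * nab2A C X dX b c d) = DivX C Gi X dX c"
proof -
  have L: "(\<Sum>b\<in>UNIV. \<Sum>d\<in>UNIV. Gi b d * nab2A C X dX b c d)
     = (\<Sum>b\<in>UNIV. \<Sum>d\<in>UNIV. Gi b d * dX b c d)
       - (\<Sum>b\<in>UNIV. \<Sum>d\<in>UNIV. \<Sum>m\<in>UNIV. Gi b d * C b c m * X m d)
       - (\<Sum>b\<in>UNIV. \<Sum>d\<in>UNIV. \<Sum>m\<in>UNIV. Gi b d * C b d m * X c m)"
    unfolding nab2A_def by (simp add: algebra_simps sum_subtractf sum_distrib_left sum.distrib)
  have R: "DivX C Gi X dX c = (\<Sum>r\<in>UNIV. \<Sum>j\<in>UNIV. Gi r j * dX r c j)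
     - (\<Sum>r\<in>UNIV. \<Sum>j\<in>UNIV. \<Sum>m\<in>UNIV. C r m r * Gi m j * X c j)
     - (\<Sum>r\<in>UNIV. \<Sum>j\<in>UNIV. \<Sum>m\<in>UNIV. C r m j * Gi r m * X c j)
     + (\<Sum>r\<in>UNIV. \<Sum>m\<in>UNIV. \<Sum>j\<in>UNIV. Gi m j * X c j * C r m r)
     - (\<Sum>r\<in>UNIV. \<Sum>m\<in>UNIV. \<Sum>j\<in>UNIV. Gi m j * X r j * C c m r)"
    unfolding DivX_def dRuX_def RuX_def dGiA_def
    by (simp add: algebra_simps sum_subtractf sum_distrib_left sum_distrib_right sum.distrib)
  have 1: "(\<Sum>r\<in>UNIV. \<Sum>j\<in>UNIV. \<Sum>m\<in>UNIV. C r m r * Gi m j * X c j)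
      = (\<Sum>r\<in>UNIV. \<Sum>m\<in>UNIV. \<Sum>j\<in>UNIV. Gi m j * X c j * C r m r)"
    unfolding sum3_tuple
    by (rule sum.reindex_bij_witness[where i="\<lambda>(r,m,j). (r,j,m)" and j="\<lambda>(r,j,m). (r,m,j)"]) (auto simp: mult_ac)
  have 2: "(\<Sum>r\<in>UNIV. \<Sum>j\<in>UNIV. \<Sum>m\<in>UNIV. C r m j * Gi r m * X c j)
      = (\<Sum>b\<in>UNIV. \<Sum>d\<in>UNIV. \<Sum>m\<in>UNIV. Gi b d * C b d m * X c m)"
    unfolding sum3_tuple
    by (rule sum.reindex_bij_witness[where i="\<lambda>(b,d,m). (b,m,d)" and j="\<lambda>(r,j,m). (r,m,j)"]) (auto simp: mult_ac)
  have 3: "(\<Sum>r\<in>UNIV. \<Sum>m\<in>UNIV. \<Sum>j\<in>UNIV. Gi m j * X r j * C c m r)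
      = (\<Sum>b\<in>UNIV. \<Sum>d\<in>UNIV. \<Sum>m\<in>UNIV. Gi b d * C b c m * X m d)"
    unfolding sum3_tuple
    by (rule sum.reindex_bij_witness[where i="\<lambda>(b,d,m). (m,b,d)" and j="\<lambda>(r,m,j). (m,j,r)"]) (auto simp: mult_ac sC[of c])
  show ?thesis unfolding L R 1 2 3 by simp
qed

lemma Q_contr:
  assumes sC: "\<And>i j k. C i j k = C j i k"
  shows "(\<Sum>b\<in>UNIV. \<Sum>d\<in>UNIV. Gi b d * (\<Sum>a\<in>UNIV. nabA C dC ddC a b c d a))
    = (\<Sum>a\<in>UNIV. dQA C dC ddC Gi a c a + (\<Sum>m\<in>UNIV. QA C dC Gi c m * C a m a) - (\<Sum>m\<in>UNIV. QA C dC Gi a m * C c m a))"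
proof -
  let ?R = "RmA C dC" and ?dR = "dRmA C dC ddC"
  have L: "(\<Sum>b\<in>UNIV. \<Sum>d\<in>UNIV. Gi b d * (\<Sum>a\<in>UNIV. nabA C dC ddC a b c d a))
    = (\<Sum>b\<in>UNIV. \<Sum>d\<in>UNIV. \<Sum>a\<in>UNIV. Gi b d * ?dR a b c d a)
     - (\<Sum>b\<in>UNIV. \<Sum>d\<in>UNIV. \<Sum>a\<in>UNIV. \<Sum>m\<in>UNIV. Gi b d * C a b m * ?R m c d a)
     - (\<Sum>b\<in>UNIV. \<Sum>d\<in>UNIV. \<Sum>a\<in>UNIV. \<Sum>m\<in>UNIV. Gi b d * C a c m * ?R b m d a)
     - (\<Sum>b\<in>UNIV. \<Sum>d\<in>UNIV. \<Sum>a\<in>UNIV. \<Sum>m\<in>UNIV. Gi b d * C a d m * ?R b c m a)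
     + (\<Sum>b\<in>UNIV. \<Sum>d\<in>UNIV. \<Sum>a\<in>UNIV. \<Sum>m\<in>UNIV. Gi b d * C a m a * ?R b c d m)"
    unfolding nabA_def
    by (simp only: sum_distrib_left sum.distrib sum_subtractf right_diff_distrib distrib_left mult.assoc)
  have R: "(\<Sum>a\<in>UNIV. dQA C dC ddC Gi a c a + (\<Sum>m\<in>UNIV. QA C dC Gi c m * C a m a) - (\<Sum>m\<in>UNIV. QA C dC Gi a m * C c m a))
    = (\<Sum>a\<in>UNIV. \<Sum>b\<in>UNIV. \<Sum>d\<in>UNIV. Gi b d * ?dR a b c d a)
     - (\<Sum>a\<in>UNIV. \<Sum>b\<in>UNIV. \<Sum>d\<in>UNIV. \<Sum>m\<in>UNIV. C a m b * Gi m d * ?R b c d a)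
     - (\<Sum>a\<in>UNIV. \<Sum>b\<in>UNIV. \<Sum>d\<in>UNIV. \<Sum>m\<in>UNIV. C a m d * Gi b m * ?R b c d a)
     + (\<Sum>a\<in>UNIV. \<Sum>m\<in>UNIV. \<Sum>b\<in>UNIV. \<Sum>d\<in>UNIV. Gi b d * ?R b c d m * C a m a)
     - (\<Sum>a\<in>UNIV. \<Sum>m\<in>UNIV. \<Sum>b\<in>UNIV. \<Sum>d\<in>UNIV. Gi b d * ?R b a d m * C c m a)"
    unfolding dQA_def QA_def dGiA_def
    by (simp add: algebra_simps sum_subtractf sum_distrib_left sum_distrib_right sum.distrib)
  have 1: "(\<Sum>b\<in>UNIV. \<Sum>d\<in>UNIV. \<Sum>a\<in>UNIV. Gi b d * ?dR a b c d a) = (\<Sum>a\<in>UNIV. \<Sum>b\<in>UNIV. \<Sum>d\<in>UNIV. Gi b d * ?dR a b c d a)"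
    unfolding sum3_tuple
    by (rule sum.reindex_bij_witness[where i="\<lambda>(a,b,d). (b,d,a)" and j="\<lambda>(b,d,a). (a,b,d)"]) auto
  have 2: "(\<Sum>b\<in>UNIV. \<Sum>d\<in>UNIV. \<Sum>a\<in>UNIV. \<Sum>m\<in>UNIV. Gi b d * C a b m * ?R m c d a)
      = (\<Sum>a\<in>UNIV. \<Sum>b\<in>UNIV. \<Sum>d\<in>UNIV. \<Sum>m\<in>UNIV. C a m b * Gi m d * ?R b c d a)"
    unfolding sum4_tuple
    by (rule sum.reindex_bij_witness[where i="\<lambda>(a,b,d,m). (m,d,a,b)" and j="\<lambda>(b,d,a,m). (a,m,d,b)"]) (auto simp: mult_ac)
  have 3: "(\<Sum>b\<in>UNIV. \<Sum>d\<in>UNIV. \<Sum>a\<in>UNIV. \<Sum>m\<in>UNIV. Gi b d * C a c m * ?R b m d a)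
      = (\<Sum>a\<in>UNIV. \<Sum>m\<in>UNIV. \<Sum>b\<in>UNIV. \<Sum>d\<in>UNIV. Gi b d * ?R b a d m * C c m a)"
    unfolding sum4_tuple
    by (rule sum.reindex_bij_witness[where i="\<lambda>(a,m,b,d). (b,d,m,a)" and j="\<lambda>(b,d,a,m). (m,a,b,d)"]) (auto simp: mult_ac sC[of _ c])
  have 4: "(\<Sum>b\<in>UNIV. \<Sum>d\<in>UNIV. \<Sum>a\<in>UNIV. \<Sum>m\<in>UNIV. Gi b d * C a d m * ?R b c m a)
      = (\<Sum>a\<in>UNIV. \<Sum>b\<in>UNIV. \<Sum>d\<in>UNIV. \<Sum>m\<in>UNIV. C a m d * Gi b m * ?R b c d a)"
    unfolding sum4_tuple
    by (rule sum.reindex_bij_witness[where i="\<lambda>(a,b,d,m). (b,m,a,d)" and j="\<lambda>(b,d,a,m). (a,b,m,d)"]) (auto simp: mult_ac)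
  have 5: "(\<Sum>b\<in>UNIV. \<Sum>d\<in>UNIV. \<Sum>a\<in>UNIV. \<Sum>m\<in>UNIV. Gi b d * C a m a * ?R b c d m)
      = (\<Sum>a\<in>UNIV. \<Sum>m\<in>UNIV. \<Sum>b\<in>UNIV. \<Sum>d\<in>UNIV. Gi b d * ?R b c d m * C a m a)"
    unfolding sum4_tuple
    by (rule sum.reindex_bij_witness[where i="\<lambda>(a,m,b,d). (b,d,a,m)" and j="\<lambda>(b,d,a,m). (a,m,b,d)"]) (auto simp: mult_ac)
  show ?thesis unfolding L R 1 2 3 4 5 by simp
qed

lemma CB1_alg:
  assumes sC: "\<And>i j k. C i j k = C j i k"
    and sdC: "\<And>a i j k. dC a i j k = dC a j i k"
    and sdd: "\<And>a b i j k. ddC a b i j k = ddC b a i j k"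
    and HQ0: "\<And>c a. QA C dC Gi c a = - RuX Gi (RcA C dC) c a"
    and HQ1: "\<And>a' c a. dQA C dC ddC Gi a' c a = - dRuX C Gi (RcA C dC) (dRcA C dC ddC) a' c a"
  shows "2 * DivX C Gi (RcA C dC) (dRcA C dC ddC) c = dtrX C Gi (RcA C dC) (dRcA C dC ddC) c"
proof -
  let ?X = "RcA C dC" and ?dX = "dRcA C dC ddC"
  have "(\<Sum>b\<in>UNIV. \<Sum>d\<in>UNIV. Gi b d * (\<Sum>a\<in>UNIV. nabA C dC ddC a b c d a))
      = (\<Sum>b\<in>UNIV. \<Sum>d\<in>UNIV. Gi b d * nab2A C ?X ?dX b c d) - (\<Sum>b\<in>UNIV. \<Sum>d\<in>UNIV. Gi b d * nab2A C ?X ?dX c b d)"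
    unfolding bianchi_contr[OF sC sdC sdd] by (simp add: right_diff_distrib sum_subtractf)
  also have "\<dots> = DivX C Gi ?X ?dX c - dtrX C Gi ?X ?dX c"
    unfolding div_lemma[OF sC] contr_trace dtrX_def ..
  finally have 1: "(\<Sum>b\<in>UNIV. \<Sum>d\<in>UNIV. Gi b d * (\<Sum>a\<in>UNIV. nabA C dC ddC a b c d a))
      = DivX C Gi ?X ?dX c - dtrX C Gi ?X ?dX c" .
  have 2: "(\<Sum>b\<in>UNIV. \<Sum>d\<in>UNIV. Gi b d * (\<Sum>a\<in>UNIV. nabA C dC ddC a b c d a)) = - DivX C Gi ?X ?dX c"
    unfolding Q_contr[OF sC] HQ0 HQ1 DivX_def
    by (simp add: sum_negf sum_subtractf sum.distrib)
  show ?thesis using 1 2 by simp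
qed


lemma sum_delta_mult5 [simp]: "(\<Sum>k::'i::finite\<in>UNIV. c * ((if i = k then 1 else 0) * f k)) = (c * f i :: real)"
  by (simp add: if_distrib if_distribR cong: if_cong)

lemma sum_delta_mult6 [simp]: "(\<Sum>k::'i::finite\<in>UNIV. c * ((if k = i then 1 else 0) * f k)) = (c * f i :: real)"
  by (simp add: if_distrib if_distribR cong: if_cong)

section \<open>Antisymmetry of the lowered curvature tensor (algebraic part)\<close>

definition dgA :: "('i::finite \<Rightarrow> 'i \<Rightarrow> 'i \<Rightarrow> real) \<Rightarrow> ('i \<Rightarrow> 'i \<Rightarrow> real) \<Rightarrow> 'i \<Rightarrow> 'i \<Rightarrow> 'i \<Rightarrow> real" where
  "dgA C g a b c = (\<Sum>m\<in>UNIV. C a b m * g m c) + (\<Sum>m\<in>UNIV. C a c m * g b m)"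

definition ddgA where
  "ddgA C dC g b c d e = (\<Sum>m\<in>UNIV. dC b c d m * g m e + C c d m * dgA C g b m e)
     + (\<Sum>m\<in>UNIV. dC b c e m * g d m + C c e m * dgA C g b d m)"

lemma antisym_alg:
  assumes sC: "\<And>i j k. C i j k = C j i k"
    and sg: "\<And>i j. g i j = g j i"
    and SCH: "ddgA C dC g b c d e = ddgA C dC g c b d e"
  shows "(\<Sum>m\<in>UNIV. g e m * RmA C dC b c d m) + (\<Sum>m\<in>UNIV. g d m * RmA C dC b c e m) = 0"
proof -
  define T1 where "T1 m = g e m * (dC b c d m - dC c b d m) + g d m * (dC b c e m - dC c b e m)" for m
  define T2 where "T2 m n = g e m * (C c d n * C b n m - C b d n * C c n m)
       + g d m * (C c e n * C b n m - C b e n * C c n m)" for m n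
  define D1 where "D1 m = (dC b c d m - dC c b d m) * g m e + (dC b c e m - dC c b e m) * g d m" for m
  define D2 where "D2 m n = C c d m * (C b m n * g n e + C b e n * g m n) - C b d m * (C c m n * g n e + C c e n * g m n)
      + C c e m * (C b d n * g n m + C b m n * g d n) - C b e m * (C c d n * g n m + C c m n * g d n)" for m n
  have t: "(\<Sum>m\<in>UNIV. g e m * RmA C dC b c d m) + (\<Sum>m\<in>UNIV. g d m * RmA C dC b c e m)
      = (\<Sum>m\<in>UNIV. T1 m) + (\<Sum>m\<in>UNIV. \<Sum>n\<in>UNIV. T2 m n)"
    unfolding RmA_def T1_def T2_def
    by (simp add: algebra_simps sum.distrib sum_subtractf sum_distrib_left)
  have d: "ddgA C dC g b c d e - ddgA C dC g c b d e = (\<Sum>m\<in>UNIV. D1 m) + (\<Sum>m\<in>UNIV. \<Sum>n\<in>UNIV. D2 m n)"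
    unfolding ddgA_def dgA_def D1_def D2_def
    by (simp add: algebra_simps sum.distrib sum_subtractf sum_distrib_left)
  have 1: "(\<Sum>m\<in>UNIV. T1 m) = (\<Sum>m\<in>UNIV. D1 m)"
    unfolding T1_def D1_def by (simp add: sg[of e] mult.commute)
  have 2: "(\<Sum>m\<in>UNIV. \<Sum>n\<in>UNIV. T2 m n - D2 m n) = 0"
    by (rule double_sum_antisym) (simp add: T2_def D2_def algebra_simps sg sC)
  have "(\<Sum>m\<in>UNIV. \<Sum>n\<in>UNIV. T2 m n) = (\<Sum>m\<in>UNIV. \<Sum>n\<in>UNIV. D2 m n)"
    using 2 by (simp add: sum_subtractf)
  then show ?thesis using t d 1 SCH by simp
qed

lemma Q_alg:
  fixes Gi g :: "'i::finite \<Rightarrow> 'i \<Rightarrow> real"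
  assumes Gg: "\<And>i j. (\<Sum>m\<in>UNIV. Gi i m * g m j) = (if i = j then 1 else 0)"
    and anti: "\<And>b c d e. (\<Sum>m\<in>UNIV. g e m * R b c d m) + (\<Sum>m\<in>UNIV. g d m * R b c e m) = 0"
  shows "(\<Sum>b\<in>UNIV. \<Sum>d\<in>UNIV. Gi b d * R b c d a) = - (\<Sum>j\<in>UNIV. Gi a j * (\<Sum>q\<in>UNIV. R q c j q))"
proof -
  have r: "R b c d a = - (\<Sum>e\<in>UNIV. Gi a e * (\<Sum>m\<in>UNIV. g d m * R b c e m))" for b d
  proof -
    have "R b c d a = (\<Sum>m\<in>UNIV. (if a = m then 1 else 0) * R b c d m)" by simp
    also have "\<dots> = (\<Sum>m\<in>UNIV. (\<Sum>e\<in>UNIV. Gi a e * g e m) * R b c d m)" by (simp only: Gg)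
    also have "\<dots> = (\<Sum>e\<in>UNIV. Gi a e * (\<Sum>m\<in>UNIV. g e m * R b c d m))"
      by (simp add: sum_distrib_left sum_distrib_right mult.assoc) (rule sum.swap)
    also have "\<dots> = (\<Sum>e\<in>UNIV. Gi a e * (- (\<Sum>m\<in>UNIV. g d m * R b c e m)))"
    proof (rule sum.cong[OF refl])
      fix e
      have "(\<Sum>m\<in>UNIV. g e m * R b c d m) = - (\<Sum>m\<in>UNIV. g d m * R b c e m)"
        using anti[of e b c d] by (simp add: eq_neg_iff_add_eq_0)
      then show "Gi a e * (\<Sum>m\<in>UNIV. g e m * R b c d m) = Gi a e * (- (\<Sum>m\<in>UNIV. g d m * R b c e m))"
        by simp
    qed
    finally show ?thesis by (simp add: sum_negf)
  qed
  have "(\<Sum>b\<in>UNIV. \<Sum>d\<in>UNIV. Gi b d * R b c d a)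
      = - (\<Sum>b\<in>UNIV. \<Sum>d\<in>UNIV. \<Sum>e\<in>UNIV. \<Sum>m\<in>UNIV. Gi a e * (Gi b d * g d m) * R b c e m)"
    unfolding r by (simp add: sum_distrib_left sum_negf mult_ac)
  also have "\<dots> = - (\<Sum>e\<in>UNIV. \<Sum>b\<in>UNIV. \<Sum>m\<in>UNIV. \<Sum>d\<in>UNIV. Gi a e * (Gi b d * g d m) * R b c e m)"
    unfolding sum4_tuple
    by (subst sum.reindex_bij_witness[where i="\<lambda>(e,b,m,d). (b,d,e,m)" and j="\<lambda>(b,d,e,m). (e,b,m,d)"]) auto
  also have "\<dots> = - (\<Sum>e\<in>UNIV. \<Sum>b\<in>UNIV. \<Sum>m\<in>UNIV. Gi a e * (\<Sum>d\<in>UNIV. Gi b d * g d m) * R b c e m)"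
    by (simp add: sum_distrib_left sum_distrib_right)
  also have "\<dots> = - (\<Sum>j\<in>UNIV. Gi a j * (\<Sum>q\<in>UNIV. R q c j q))"
    by (simp add: Gg sum_distrib_left mult.assoc)
  finally show ?thesis .
qed


lemma nab2A_sym:
  assumes "\<And>i j. X i j = X j i" "\<And>a i j. dX a i j = dX a j i"
  shows "nab2A C X dX a i j = nab2A C X dX a j i"
  unfolding nab2A_def using assms by (simp add: algebra_simps)

definition tRcA where
  "tRcA C A dA j k = (\<Sum>q\<in>UNIV. dA q j k q - dA j q k q + (\<Sum>m\<in>UNIV. A j k m * C q m q + C j k m * A q m q
      - A q k m * C j m q - C q k m * A j m q))"

lemma palatini_alg:
  fixes C :: "'i::finite \<Rightarrow> 'i \<Rightarrow> 'i \<Rightarrow> real"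
  assumes sC: "\<And>i j k. C i j k = C j i k"
  shows "(\<Sum>j\<in>UNIV. \<Sum>k\<in>UNIV. Gi j k * tRcA C A dA j k)
    = (\<Sum>r\<in>UNIV. (\<Sum>j\<in>UNIV. \<Sum>k\<in>UNIV. dGiA C Gi r j k * A j k r + Gi j k * dA r j k r)
          + (\<Sum>m\<in>UNIV. C r m r * (\<Sum>j\<in>UNIV. \<Sum>k\<in>UNIV. Gi j k * A j k m)))
      - (\<Sum>j\<in>UNIV. \<Sum>k\<in>UNIV. Gi j k * ((\<Sum>r\<in>UNIV. dA j r k r) - (\<Sum>m\<in>UNIV. C j k m * (\<Sum>r\<in>UNIV. A r m r))))"
proof -
  have L: "(\<Sum>j\<in>UNIV. \<Sum>k\<in>UNIV. Gi j k * tRcA C A dA j k)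
    = (\<Sum>j\<in>UNIV. \<Sum>k\<in>UNIV. \<Sum>q\<in>UNIV. Gi j k * dA q j k q)
    - (\<Sum>j\<in>UNIV. \<Sum>k\<in>UNIV. \<Sum>q\<in>UNIV. Gi j k * dA j q k q)
    + (\<Sum>j\<in>UNIV. \<Sum>k\<in>UNIV. \<Sum>q\<in>UNIV. \<Sum>m\<in>UNIV. Gi j k * A j k m * C q m q)
    + (\<Sum>j\<in>UNIV. \<Sum>k\<in>UNIV. \<Sum>q\<in>UNIV. \<Sum>m\<in>UNIV. Gi j k * C j k m * A q m q)
    - (\<Sum>j\<in>UNIV. \<Sum>k\<in>UNIV. \<Sum>q\<in>UNIV. \<Sum>m\<in>UNIV. Gi j k * A q k m * C j m q)
    - (\<Sum>j\<in>UNIV. \<Sum>k\<in>UNIV. \<Sum>q\<in>UNIV. \<Sum>m\<in>UNIV. Gi j k * C q k m * A j m q)"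
    unfolding tRcA_def by (simp add: algebra_simps sum.distrib sum_subtractf sum_distrib_left)
  have R: "(\<Sum>r\<in>UNIV. (\<Sum>j\<in>UNIV. \<Sum>k\<in>UNIV. dGiA C Gi r j k * A j k r + Gi j k * dA r j k r)
          + (\<Sum>m\<in>UNIV. C r m r * (\<Sum>j\<in>UNIV. \<Sum>k\<in>UNIV. Gi j k * A j k m)))
      - (\<Sum>j\<in>UNIV. \<Sum>k\<in>UNIV. Gi j k * ((\<Sum>r\<in>UNIV. dA j r k r) - (\<Sum>m\<in>UNIV. C j k m * (\<Sum>r\<in>UNIV. A r m r))))
    = - (\<Sum>r\<in>UNIV. \<Sum>j\<in>UNIV. \<Sum>k\<in>UNIV. \<Sum>m\<in>UNIV. C r m j * Gi m k * A j k r)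
      - (\<Sum>r\<in>UNIV. \<Sum>j\<in>UNIV. \<Sum>k\<in>UNIV. \<Sum>m\<in>UNIV. C r m k * Gi j m * A j k r)
      + (\<Sum>r\<in>UNIV. \<Sum>j\<in>UNIV. \<Sum>k\<in>UNIV. Gi j k * dA r j k r)
      + (\<Sum>r\<in>UNIV. \<Sum>m\<in>UNIV. \<Sum>j\<in>UNIV. \<Sum>k\<in>UNIV. C r m r * Gi j k * A j k m)
      - (\<Sum>j\<in>UNIV. \<Sum>k\<in>UNIV. \<Sum>r\<in>UNIV. Gi j k * dA j r k r)
      + (\<Sum>j\<in>UNIV. \<Sum>k\<in>UNIV. \<Sum>m\<in>UNIV. \<Sum>r\<in>UNIV. Gi j k * C j k m * A r m r)"
    unfolding dGiA_def
    by (simp add: algebra_simps sum.distrib sum_subtractf sum_distrib_left sum_distrib_right)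
  have 1: "(\<Sum>j\<in>UNIV. \<Sum>k\<in>UNIV. \<Sum>q\<in>UNIV. Gi j k * dA q j k q) = (\<Sum>r\<in>UNIV. \<Sum>j\<in>UNIV. \<Sum>k\<in>UNIV. Gi j k * dA r j k r)"
    unfolding sum3_tuple
    by (rule sum.reindex_bij_witness[where i="\<lambda>(r,j,k). (j,k,r)" and j="\<lambda>(j,k,r). (r,j,k)"]) auto
  have 2: "(\<Sum>j\<in>UNIV. \<Sum>k\<in>UNIV. \<Sum>q\<in>UNIV. \<Sum>m\<in>UNIV. Gi j k * A j k m * C q m q)
      = (\<Sum>r\<in>UNIV. \<Sum>m\<in>UNIV. \<Sum>j\<in>UNIV. \<Sum>k\<in>UNIV. C r m r * Gi j k * A j k m)"
    unfolding sum4_tuple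
    by (rule sum.reindex_bij_witness[where i="\<lambda>(r,m,j,k). (j,k,r,m)" and j="\<lambda>(j,k,r,m). (r,m,j,k)"]) (auto simp: mult_ac)
  have 3: "(\<Sum>j\<in>UNIV. \<Sum>k\<in>UNIV. \<Sum>q\<in>UNIV. \<Sum>m\<in>UNIV. Gi j k * C j k m * A q m q)
      = (\<Sum>j\<in>UNIV. \<Sum>k\<in>UNIV. \<Sum>m\<in>UNIV. \<Sum>r\<in>UNIV. Gi j k * C j k m * A r m r)"
    unfolding sum4_tuple
    by (rule sum.reindex_bij_witness[where i="\<lambda>(j,k,m,r). (j,k,r,m)" and j="\<lambda>(j,k,r,m). (j,k,m,r)"]) auto
  have 4: "(\<Sum>j\<in>UNIV. \<Sum>k\<in>UNIV. \<Sum>q\<in>UNIV. \<Sum>m\<in>UNIV. Gi j k * A q k m * C j m q)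
      = (\<Sum>r\<in>UNIV. \<Sum>j\<in>UNIV. \<Sum>k\<in>UNIV. \<Sum>m\<in>UNIV. C r m j * Gi m k * A j k r)"
    unfolding sum4_tuple
    by (rule sum.reindex_bij_witness[where i="\<lambda>(r,j',k',m'). (m',k',j',r)" and j="\<lambda>(j,k,q,m). (m,q,k,j)"]) (auto simp: mult_ac sC[of _ j for j])
  have 5: "(\<Sum>j\<in>UNIV. \<Sum>k\<in>UNIV. \<Sum>q\<in>UNIV. \<Sum>m\<in>UNIV. Gi j k * C q k m * A j m q)
      = (\<Sum>r\<in>UNIV. \<Sum>j\<in>UNIV. \<Sum>k\<in>UNIV. \<Sum>m\<in>UNIV. C r m k * Gi j m * A j k r)"
    unfolding sum4_tuple
    by (rule sum.reindex_bij_witness[where i="\<lambda>(r,j',k',m'). (j',m',r,k')" and j="\<lambda>(j,k,q,m). (q,j,m,k)"]) (auto simp: mult_ac)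
  show ?thesis unfolding L R 1 2 3 4 5 by simp
qed


context RF
begin

lemma sm_dtil [simp]: "smooth_on \<Omega> f \<Longrightarrow> smooth_on \<Omega> (dtil a f)"
  by (rule smooth_dtil)

lemma sm_basic [simp]: "smooth_on \<Omega> (g i j)" "smooth_on \<Omega> (G i j)" "smooth_on \<Omega> (Gam i j k)"
  "smooth_on \<Omega> (\<lambda>q. c)"
  by (auto intro: sm_g sm_G sm_Gam sm_const)

lemma sm_ops [simp]:
  "smooth_on \<Omega> f \<Longrightarrow> smooth_on \<Omega> h \<Longrightarrow> smooth_on \<Omega> (\<lambda>q. f q * h q)"
  "smooth_on \<Omega> f \<Longrightarrow> smooth_on \<Omega> h \<Longrightarrow> smooth_on \<Omega> (\<lambda>q. f q + h q)"
  "smooth_on \<Omega> f \<Longrightarrow> smooth_on \<Omega> h \<Longrightarrow> smooth_on \<Omega> (\<lambda>q. f q - h q)"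
  "smooth_on \<Omega> f \<Longrightarrow> smooth_on \<Omega> (\<lambda>q. - f q)"
  "(\<And>m. smooth_on \<Omega> (F m)) \<Longrightarrow> smooth_on \<Omega> (\<lambda>q. \<Sum>m\<in>UNIV. (F :: 'j::finite \<Rightarrow> _) m q)"
  by (auto intro: smooth_mult smooth_add smooth_diff smooth_minus smooth_sum opn)

lemma d_rules:
  "p \<in> \<Omega> \<Longrightarrow> smooth_on \<Omega> f \<Longrightarrow> smooth_on \<Omega> h \<Longrightarrow> dtil a (\<lambda>q. f q * h q) p = dtil a f p * h p + f p * dtil a h p"
  "p \<in> \<Omega> \<Longrightarrow> smooth_on \<Omega> f \<Longrightarrow> smooth_on \<Omega> h \<Longrightarrow> dtil a (\<lambda>q. f q + h q) p = dtil a f p + dtil a h p"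
  "p \<in> \<Omega> \<Longrightarrow> smooth_on \<Omega> f \<Longrightarrow> smooth_on \<Omega> h \<Longrightarrow> dtil a (\<lambda>q. f q - h q) p = dtil a f p - dtil a h p"
  "p \<in> \<Omega> \<Longrightarrow> smooth_on \<Omega> f \<Longrightarrow> dtil a (\<lambda>q. - f q) p = - dtil a f p"
  "p \<in> \<Omega> \<Longrightarrow> (\<And>m. smooth_on \<Omega> (F m)) \<Longrightarrow> dtil a (\<lambda>q. \<Sum>m\<in>UNIV. (F :: 'j::finite \<Rightarrow> _) m q) p = (\<Sum>m\<in>UNIV. dtil a (F m) p)"
  by (auto intro!: dtil_mult dtil_add dtil_diff dtil_minus dtil_sum diffble)

lemma curv_fun: "curv dx Gam b c d e = (\<lambda>q. dtil (Some b) (Gam c d e) q - dtil (Some c) (Gam b d e) q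
   + (\<Sum>m\<in>UNIV. Gam c d m q * Gam b m e q - Gam b d m q * Gam c m e q))"
  by (rule ext) (simp add: curv_def dx_dtil)

lemma sm_curv [simp]: "smooth_on \<Omega> (curv dx Gam b c d e)"
  unfolding curv_fun by simp

lemma Ric_fun: "Ric g j k = (\<lambda>q. \<Sum>r\<in>UNIV. curv dx Gam r j k r q)"
  by (rule ext) (simp add: Ric_def ricci_def)

lemma sm_Ric [simp]: "smooth_on \<Omega> (Ric g j k)"
  unfolding Ric_fun by simp

lemma Ric_up_fun: "Ric_up g i k = (\<lambda>q. \<Sum>j\<in>UNIV. G k j q * Ric g i j q)"
  by (rule ext) (simp add: Ric_up_def)

lemma sm_Ric_up [simp]: "smooth_on \<Omega> (Ric_up g i k)"
  unfolding Ric_up_fun by simp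

lemma scal_fun: "scal g = (\<lambda>q. \<Sum>j\<in>UNIV. \<Sum>k\<in>UNIV. G j k q * Ric g j k q)"
  by (rule ext) (simp add: scal_def)

lemma sm_scal [simp]: "smooth_on \<Omega> (scal g)"
  unfolding scal_fun by simp

lemma grad_scal_fun: "grad_scal g k = (\<lambda>q. \<Sum>l\<in>UNIV. G k l q * dtil (Some l) (scal g) q)"
  by (rule ext) (simp add: grad_scal_def dx_dtil)

lemma sm_grad_scal [simp]: "smooth_on \<Omega> (grad_scal g k)"
  unfolding grad_scal_fun by simp

abbreviation "Cp p \<equiv> \<lambda>i j k. Gam i j k p"
abbreviation "dCp p \<equiv> \<lambda>a i j k. dtil (Some a) (Gam i j k) p"
abbreviation "ddCp p \<equiv> \<lambda>a b i j k. dtil (Some a) (dtil (Some b) (Gam i j k)) p"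
abbreviation "Gp p \<equiv> \<lambda>i j. G i j p"
abbreviation "gp p \<equiv> \<lambda>i j. g i j p"

lemma curv_at: "curv dx Gam b c d e p = RmA (Cp p) (dCp p) b c d e"
  by (simp add: curv_def RmA_def dx_dtil)

lemma dcurv_at: "p \<in> \<Omega> \<Longrightarrow> dtil (Some a) (curv dx Gam b c d e) p = dRmA (Cp p) (dCp p) (ddCp p) a b c d e"
  unfolding curv_fun dRmA_def by (simp add: d_rules sum_subtractf sum.distrib algebra_simps)

lemma Ric_at: "Ric g j k p = RcA (Cp p) (dCp p) j k"
  by (simp add: Ric_fun RcA_def curv_at)

lemma dRic_at: "p \<in> \<Omega> \<Longrightarrow> dtil (Some a) (Ric g j k) p = dRcA (Cp p) (dCp p) (ddCp p) a j k"
  unfolding Ric_fun dRcA_def by (simp add: d_rules dcurv_at)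

lemma dG_at: "p \<in> \<Omega> \<Longrightarrow> dtil (Some a) (G b c) p = dGiA (Cp p) (Gp p) a b c"
  unfolding dGiA_def by (rule compat_upper)

lemma Ric_up_at: "Ric_up g l k p = RuX (Gp p) (RcA (Cp p) (dCp p)) l k"
  by (simp add: Ric_up_def RuX_def Ric_at)

lemma dRic_up_at: "p \<in> \<Omega> \<Longrightarrow>
   dtil (Some a) (Ric_up g l k) p = dRuX (Cp p) (Gp p) (RcA (Cp p) (dCp p)) (dRcA (Cp p) (dCp p) (ddCp p)) a l k"
  unfolding Ric_up_fun dRuX_def by (simp add: d_rules) (simp add: dG_at dRic_at Ric_at)

lemma dscal_at: "p \<in> \<Omega> \<Longrightarrow>
   dtil (Some c) (scal g) p = dtrX (Cp p) (Gp p) (RcA (Cp p) (dCp p)) (dRcA (Cp p) (dCp p) (ddCp p)) c"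
  unfolding scal_fun dtrX_def by (simp add: d_rules) (simp add: dG_at dRic_at Ric_at)

lemma sC_at: "p \<in> \<Omega> \<Longrightarrow> Cp p i j k = Cp p j i k"
  by (rule Gam_sym)

lemma sdC_at: "p \<in> \<Omega> \<Longrightarrow> dCp p a i j k = dCp p a j i k"
  by (rule dtil_local[OF opn]) (auto intro: Gam_sym)

lemma sdd_at: "p \<in> \<Omega> \<Longrightarrow> ddCp p a b i j k = ddCp p b a i j k"
  by (rule schwarz_dtil[OF sm_Gam])

lemma ddg_at: assumes p: "p \<in> \<Omega>"
  shows "dtil (Some b) (dtil (Some c) (g d e)) p = ddgA (Cp p) (dCp p) (gp p) b c d e"
proof -
  have "dtil (Some b) (dtil (Some c) (g d e)) p
     = dtil (Some b) (\<lambda>q. (\<Sum>m\<in>UNIV. Gam c d m q * g m e q) + (\<Sum>m\<in>UNIV. Gam c e m q * g d m q)) p"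
    by (rule dtil_local[OF opn p]) (rule compat_lower)
  also have "\<dots> = ddgA (Cp p) (dCp p) (gp p) b c d e"
    unfolding ddgA_def dgA_def by (simp add: d_rules sum.distrib p) (simp add: compat_lower[OF p])
  finally show ?thesis .
qed

lemma antisym_at: assumes p: "p \<in> \<Omega>"
  shows "(\<Sum>m\<in>UNIV. g e m p * RmA (Cp p) (dCp p) b c d m) + (\<Sum>m\<in>UNIV. g d m p * RmA (Cp p) (dCp p) b c e m) = 0"
proof (rule antisym_alg[where C="Cp p" and g="gp p"])
  show "\<And>i j k. Cp p i j k = Cp p j i k" using sC_at[OF p] .
  show "\<And>i j. gp p i j = gp p j i" using sym_g[OF p] .
  show "ddgA (Cp p) (dCp p) (gp p) b c d e = ddgA (Cp p) (dCp p) (gp p) c b d e"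
    using ddg_at[OF p, of b c d e] ddg_at[OF p, of c b d e] schwarz_dtil[OF sm_g p] by metis
qed

lemma HQ0_at: assumes p: "p \<in> \<Omega>"
  shows "QA (Cp p) (dCp p) (Gp p) c a = - RuX (Gp p) (RcA (Cp p) (dCp p)) c a"
  unfolding QA_def RuX_def RcA_def
  by (rule Q_alg[where g="gp p"]) (use Gg[OF p] antisym_at[OF p] in auto)

lemma HQ1_at: assumes p: "p \<in> \<Omega>"
  shows "dQA (Cp p) (dCp p) (ddCp p) (Gp p) a' c a
    = - dRuX (Cp p) (Gp p) (RcA (Cp p) (dCp p)) (dRcA (Cp p) (dCp p) (ddCp p)) a' c a"
proof -
  have "dtil (Some a') (\<lambda>q. \<Sum>b\<in>UNIV. \<Sum>d\<in>UNIV. G b d q * curv dx Gam b c d a q) p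
      = dtil (Some a') (\<lambda>q. - Ric_up g c a q) p"
    by (rule dtil_local[OF opn p]) (simp add: HQ0_at[unfolded QA_def] curv_at Ric_up_at)
  moreover have "dtil (Some a') (\<lambda>q. \<Sum>b\<in>UNIV. \<Sum>d\<in>UNIV. G b d q * curv dx Gam b c d a q) p
      = dQA (Cp p) (dCp p) (ddCp p) (Gp p) a' c a"
    unfolding dQA_def by (simp add: d_rules p) (simp add: dG_at p dcurv_at curv_at)
  moreover have "dtil (Some a') (\<lambda>q. - Ric_up g c a q) p
      = - dRuX (Cp p) (Gp p) (RcA (Cp p) (dCp p)) (dRcA (Cp p) (dCp p) (ddCp p)) a' c a"
    by (simp add: d_rules p dRic_up_at)
  ultimately show ?thesis by simp
qed

lemma CB1: assumes p: "p \<in> \<Omega>"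
  shows "(\<Sum>r\<in>UNIV. dtil (Some r) (Ric_up g l r) p + (\<Sum>m\<in>UNIV. Ric_up g l m p * Gam r m r p)
           - (\<Sum>m\<in>UNIV. Ric_up g r m p * Gam l m r p)) = 1/2 * dtil (Some l) (scal g) p"
proof -
  have "2 * DivX (Cp p) (Gp p) (RcA (Cp p) (dCp p)) (dRcA (Cp p) (dCp p) (ddCp p)) l
      = dtrX (Cp p) (Gp p) (RcA (Cp p) (dCp p)) (dRcA (Cp p) (dCp p) (ddCp p)) l"
    by (rule CB1_alg) (auto intro: sC_at[OF p] sdC_at[OF p] sdd_at[OF p] HQ0_at[OF p] HQ1_at[OF p])
  then show ?thesis
    unfolding DivX_def by (simp add: dRic_up_at[OF p] Ric_up_at dscal_at[OF p])
qed

end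

lemma E2_alg:
  fixes C :: "'i::finite \<Rightarrow> 'i \<Rightarrow> 'i \<Rightarrow> real"
  assumes sC: "\<And>i j k. C i j k = C j i k" and sX: "\<And>i j. X i j = X j i"
    and HY: "\<And>b. (\<Sum>l\<in>UNIV. Gi b l * Y l) = 2 * C i j b"
  shows "1/2 * (\<Sum>l\<in>UNIV. (2 * (\<Sum>a\<in>UNIV. \<Sum>b\<in>UNIV. Gi k a * X a b * Gi b l)) * Y l
            + Gi k l * (-2 * dX i j l + -2 * dX j i l - -2 * dX l i j))
    = - (\<Sum>l\<in>UNIV. Gi k l * (nab2A C X dX i j l + nab2A C X dX j i l - nab2A C X dX l i j))"
proof -
  have 1: "(\<Sum>l\<in>UNIV. (\<Sum>a\<in>UNIV. \<Sum>b\<in>UNIV. Gi k a * X a b * Gi b l) * Y l)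
      = (\<Sum>a\<in>UNIV. \<Sum>b\<in>UNIV. Gi k a * X a b * (\<Sum>l\<in>UNIV. Gi b l * Y l))"
  proof -
    have "(\<Sum>l\<in>UNIV. (\<Sum>a\<in>UNIV. \<Sum>b\<in>UNIV. Gi k a * X a b * Gi b l) * Y l)
      = (\<Sum>l\<in>UNIV. \<Sum>a\<in>UNIV. \<Sum>b\<in>UNIV. Gi k a * X a b * Gi b l * Y l)"
      by (simp add: sum_distrib_right)
    also have "\<dots> = (\<Sum>a\<in>UNIV. \<Sum>b\<in>UNIV. \<Sum>l\<in>UNIV. Gi k a * X a b * Gi b l * Y l)"
      unfolding sum3_tuple
      by (rule sum.reindex_bij_witness[where i="\<lambda>(a,b,l). (l,a,b)" and j="\<lambda>(l,a,b). (a,b,l)"]) auto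
    finally show ?thesis by (simp add: sum_distrib_left mult.assoc)
  qed
  have 2: "(\<Sum>l\<in>UNIV. Gi k l * (nab2A C X dX i j l + nab2A C X dX j i l - nab2A C X dX l i j))
      = (\<Sum>l\<in>UNIV. Gi k l * (dX i j l + dX j i l - dX l i j)) - 2 * (\<Sum>l\<in>UNIV. \<Sum>m\<in>UNIV. Gi k l * C i j m * X m l)"
  proof -
    have "nab2A C X dX i j l + nab2A C X dX j i l - nab2A C X dX l i j
        = (dX i j l + dX j i l - dX l i j) - 2 * (\<Sum>m\<in>UNIV. C i j m * X m l)" for l
      unfolding nab2A_def
      by (simp add: algebra_simps sum.distrib sum_subtractf sC[of l] sC[of j i] sX[of j] sX[of _ l] sum_distrib_left[symmetric])
    then have "(\<Sum>l\<in>UNIV. Gi k l * (nab2A C X dX i j l + nab2A C X dX j i l - nab2A C X dX l i j))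
      = (\<Sum>l\<in>UNIV. Gi k l * ((dX i j l + dX j i l - dX l i j) - 2 * (\<Sum>m\<in>UNIV. C i j m * X m l)))"
      by simp
    then show ?thesis
      by (simp add: right_diff_distrib sum_subtractf sum_distrib_left mult_ac)
  qed
  define S where "S l = (\<Sum>a\<in>UNIV. \<Sum>b\<in>UNIV. Gi k a * X a b * Gi b l)" for l
  have a: "(2 * S l) * Y l + Gi k l * (-2 * dX i j l + -2 * dX j i l - -2 * dX l i j)
      = 2 * (S l * Y l - Gi k l * (dX i j l + dX j i l - dX l i j))" for l
    by (simp add: algebra_simps)
  have L: "1/2 * (\<Sum>l\<in>UNIV. (2 * S l) * Y l + Gi k l * (-2 * dX i j l + -2 * dX j i l - -2 * dX l i j))
      = (\<Sum>l\<in>UNIV. S l * Y l) - (\<Sum>l\<in>UNIV. Gi k l * (dX i j l + dX j i l - dX l i j))"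
    unfolding a by (simp add: sum_distrib_left[symmetric] sum_subtractf)
  have 3: "(\<Sum>a\<in>UNIV. \<Sum>b\<in>UNIV. Gi k a * X a b * (\<Sum>l\<in>UNIV. Gi b l * Y l))
      = 2 * (\<Sum>l\<in>UNIV. \<Sum>m\<in>UNIV. Gi k l * C i j m * X m l)"
    unfolding HY by (simp add: sum_distrib_left sX[of _ l for l] mult_ac)
  show ?thesis unfolding 2 L[unfolded S_def] 1 3 by simp
qed

lemma H2_alg:
  fixes C :: "'i::finite \<Rightarrow> 'i \<Rightarrow> 'i \<Rightarrow> real"
  assumes sX: "\<And>i j. X i j = X j i"
  shows "(\<Sum>j\<in>UNIV. \<Sum>k\<in>UNIV. (2 * (\<Sum>a\<in>UNIV. \<Sum>b\<in>UNIV. Gi j a * X a b * Gi b k)) * X j k)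
     + (\<Sum>j\<in>UNIV. \<Sum>k\<in>UNIV. Gi j k * (ddS j k - (\<Sum>m\<in>UNIV. C j k m * dS m)))
   = (\<Sum>r\<in>UNIV. \<Sum>l\<in>UNIV. dGiA C Gi r r l * dS l + Gi r l * ddS r l)
     + (\<Sum>r\<in>UNIV. \<Sum>m\<in>UNIV. (\<Sum>l\<in>UNIV. Gi m l * dS l) * C r m r)
     + 2 * (\<Sum>r\<in>UNIV. \<Sum>m\<in>UNIV. RuX Gi X r m * RuX Gi X m r)"
proof -
  have sq: "(\<Sum>j\<in>UNIV. \<Sum>k\<in>UNIV. (2 * (\<Sum>a\<in>UNIV. \<Sum>b\<in>UNIV. Gi j a * X a b * Gi b k)) * X j k)
      = 2 * (\<Sum>r\<in>UNIV. \<Sum>m\<in>UNIV. RuX Gi X r m * RuX Gi X m r)"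
  proof -
    have "(\<Sum>j\<in>UNIV. \<Sum>k\<in>UNIV. (2 * (\<Sum>a\<in>UNIV. \<Sum>b\<in>UNIV. Gi j a * X a b * Gi b k)) * X j k)
       = 2 * (\<Sum>j\<in>UNIV. \<Sum>k\<in>UNIV. \<Sum>a\<in>UNIV. \<Sum>b\<in>UNIV. Gi j a * X a b * Gi b k * X j k)"
      by (simp add: sum_distrib_left sum_distrib_right mult.assoc)
    also have "(\<Sum>j\<in>UNIV. \<Sum>k\<in>UNIV. \<Sum>a\<in>UNIV. \<Sum>b\<in>UNIV. Gi j a * X a b * Gi b k * X j k)
       = (\<Sum>r\<in>UNIV. \<Sum>m\<in>UNIV. \<Sum>i\<in>UNIV. \<Sum>j\<in>UNIV. Gi m j * X r j * (Gi r i * X m i))"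
      unfolding sum4_tuple
      by (rule sum.reindex_bij_witness[where i="\<lambda>(r,m,i,j'). (r,j',i,m)" and j="\<lambda>(j,k,a,b). (j,b,a,k)"])
         (auto simp: mult_ac sX[of _ b for b])
    also have "\<dots> = (\<Sum>r\<in>UNIV. \<Sum>m\<in>UNIV. RuX Gi X r m * RuX Gi X m r)"
      unfolding RuX_def by (simp add: sum_distrib_left sum_distrib_right)
    finally show ?thesis .
  qed
  have lap: "(\<Sum>j\<in>UNIV. \<Sum>k\<in>UNIV. Gi j k * (ddS j k - (\<Sum>m\<in>UNIV. C j k m * dS m)))
     = (\<Sum>r\<in>UNIV. \<Sum>l\<in>UNIV. dGiA C Gi r r l * dS l + Gi r l * ddS r l)
     + (\<Sum>r\<in>UNIV. \<Sum>m\<in>UNIV. (\<Sum>l\<in>UNIV. Gi m l * dS l) * C r m r)"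
  proof -
    have L: "(\<Sum>j\<in>UNIV. \<Sum>k\<in>UNIV. Gi j k * (ddS j k - (\<Sum>m\<in>UNIV. C j k m * dS m)))
      = (\<Sum>j\<in>UNIV. \<Sum>k\<in>UNIV. Gi j k * ddS j k) - (\<Sum>j\<in>UNIV. \<Sum>k\<in>UNIV. \<Sum>m\<in>UNIV. Gi j k * C j k m * dS m)"
      by (simp add: right_diff_distrib sum_subtractf sum_distrib_left mult.assoc)
    have R: "(\<Sum>r\<in>UNIV. \<Sum>l\<in>UNIV. dGiA C Gi r r l * dS l + Gi r l * ddS r l)
      + (\<Sum>r\<in>UNIV. \<Sum>m\<in>UNIV. (\<Sum>l\<in>UNIV. Gi m l * dS l) * C r m r)
      = - (\<Sum>r\<in>UNIV. \<Sum>l\<in>UNIV. \<Sum>m\<in>UNIV. C r m r * Gi m l * dS l)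
        - (\<Sum>r\<in>UNIV. \<Sum>l\<in>UNIV. \<Sum>m\<in>UNIV. C r m l * Gi r m * dS l)
        + (\<Sum>r\<in>UNIV. \<Sum>l\<in>UNIV. Gi r l * ddS r l)
        + (\<Sum>r\<in>UNIV. \<Sum>m\<in>UNIV. \<Sum>l\<in>UNIV. Gi m l * dS l * C r m r)"
      unfolding dGiA_def
      by (simp add: algebra_simps sum.distrib sum_subtractf sum_distrib_left sum_distrib_right)
    have 1: "(\<Sum>r\<in>UNIV. \<Sum>l\<in>UNIV. \<Sum>m\<in>UNIV. C r m r * Gi m l * dS l)
        = (\<Sum>r\<in>UNIV. \<Sum>m\<in>UNIV. \<Sum>l\<in>UNIV. Gi m l * dS l * C r m r)"
      by (subst sum3_23) (simp add: mult_ac)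
    have 2: "(\<Sum>r\<in>UNIV. \<Sum>l\<in>UNIV. \<Sum>m\<in>UNIV. C r m l * Gi r m * dS l)
        = (\<Sum>j\<in>UNIV. \<Sum>k\<in>UNIV. \<Sum>m\<in>UNIV. Gi j k * C j k m * dS m)"
      by (subst sum3_23) (simp add: mult_ac)
    show ?thesis unfolding L R 1 2 by simp
  qed
  show ?thesis unfolding sq lap by simp
qed

context RF
begin

abbreviation "Np p \<equiv> nab2A (Cp p) (RcA (Cp p) (dCp p)) (dRcA (Cp p) (dCp p) (ddCp p))"

lemma Ric_sym: "p \<in> \<Omega> \<Longrightarrow> Ric g i j p = Ric g j i p"
proof -
  assume p: "p \<in> \<Omega>"
  have "dt (g i j) p = dt (g j i) p" unfolding dt_dtil by (rule dg_sym[OF p])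
  then show ?thesis using flow[OF p, of i j] flow[OF p, of j i] by simp
qed

lemma RcA_sym: "p \<in> \<Omega> \<Longrightarrow> RcA (Cp p) (dCp p) i j = RcA (Cp p) (dCp p) j i"
  using Ric_sym[of p i j] by (simp add: Ric_at)

lemma dRcA_sym: "p \<in> \<Omega> \<Longrightarrow> dRcA (Cp p) (dCp p) (ddCp p) a i j = dRcA (Cp p) (dCp p) (ddCp p) a j i"
proof -
  assume p: "p \<in> \<Omega>"
  have "dtil (Some a) (Ric g i j) p = dtil (Some a) (Ric g j i) p"
    by (rule dtil_local[OF opn p]) (rule Ric_sym)
  then show ?thesis using dRic_at[OF p] by simp
qed

lemma Np_sym: "p \<in> \<Omega> \<Longrightarrow> Np p a i j = Np p a j i"
  by (rule nab2A_sym) (auto intro: RcA_sym dRcA_sym)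

lemma E1: "p \<in> \<Omega> \<Longrightarrow> dtil None (G i j) p = 2 * (\<Sum>k\<in>UNIV. \<Sum>l\<in>UNIV. G i k p * RcA (Cp p) (dCp p) k l * G l j p)"
proof -
  assume p: "p \<in> \<Omega>"
  have "dtil None (G i j) p = - (\<Sum>k\<in>UNIV. \<Sum>l\<in>UNIV. G i k p * dtil None (g k l) p * G l j p)"
    by (rule dG[OF p])
  also have "\<dots> = - (\<Sum>k\<in>UNIV. \<Sum>l\<in>UNIV. G i k p * (-2 * Ric g k l p) * G l j p)"
    using flow[OF p] by (simp add: dt_dtil)
  finally show ?thesis by (simp add: Ric_at sum_distrib_left sum_negf mult_ac)
qed

lemma dtdg: "p \<in> \<Omega> \<Longrightarrow> dtil None (dtil (Some i) (g j l)) p = -2 * dRcA (Cp p) (dCp p) (ddCp p) i j l"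
proof -
  assume p: "p \<in> \<Omega>"
  have "dtil None (dtil (Some i) (g j l)) p = dtil (Some i) (dtil None (g j l)) p"
    by (rule schwarz_dtil[OF sm_g p])
  also have "\<dots> = dtil (Some i) (\<lambda>q. -2 * Ric g j l q) p"
    by (rule dtil_local[OF opn p]) (simp add: flow dt_dtil[symmetric])
  also have "\<dots> = -2 * dRcA (Cp p) (dCp p) (ddCp p) i j l"
    by (simp add: d_rules p dRic_at)
  finally show ?thesis .
qed

lemma Gam_fun: "Gam i j k = (\<lambda>q. 1/2 * (\<Sum>l\<in>UNIV. G k l q *
      (dtil (Some i) (g j l) q + dtil (Some j) (g i l) q - dtil (Some l) (g i j) q)))"
  by (rule ext) (rule Gam_def')

lemma E2: assumes p: "p \<in> \<Omega>"
  shows "dtil None (Gam i j k) p = - (\<Sum>l\<in>UNIV. G k l p * (Np p i j l + Np p j i l - Np p l i j))"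
proof -
  let ?Y = "\<lambda>l. dtil (Some i) (g j l) p + dtil (Some j) (g i l) p - dtil (Some l) (g i j) p"
  let ?X = "RcA (Cp p) (dCp p)" and ?dX = "dRcA (Cp p) (dCp p) (ddCp p)"
  have "dtil None (Gam i j k) p = 1/2 * (\<Sum>l\<in>UNIV. (2 * (\<Sum>a\<in>UNIV. \<Sum>b\<in>UNIV. G k a p * ?X a b * G b l p)) * ?Y l
            + G k l p * (-2 * ?dX i j l + -2 * ?dX j i l - -2 * ?dX l i j))"
  proof -
    have "dtil None (Gam i j k) p = 1/2 * dtil None (\<lambda>q. \<Sum>l\<in>UNIV. G k l q *
      (dtil (Some i) (g j l) q + dtil (Some j) (g i l) q - dtil (Some l) (g i j) q)) p"
      by (subst Gam_fun, rule dtil_cmult, rule diffble[OF _ p]) simp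
    also have "dtil None (\<lambda>q. \<Sum>l\<in>UNIV. G k l q *
      (dtil (Some i) (g j l) q + dtil (Some j) (g i l) q - dtil (Some l) (g i j) q)) p
      = (\<Sum>l\<in>UNIV. (2 * (\<Sum>a\<in>UNIV. \<Sum>b\<in>UNIV. G k a p * ?X a b * G b l p)) * ?Y l
            + G k l p * (-2 * ?dX i j l + -2 * ?dX j i l - -2 * ?dX l i j))"
      by (simp add: d_rules p) (simp add: E1[OF p] dtdg[OF p])
    finally show ?thesis .
  qed
  also have "\<dots> = - (\<Sum>l\<in>UNIV. G k l p * (Np p i j l + Np p j i l - Np p l i j))"
  proof (rule E2_alg)
    show "\<And>i j k. Cp p i j k = Cp p j i k" using sC_at[OF p] .
    show "\<And>i j. ?X i j = ?X j i" using RcA_sym[OF p] .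
    show "\<And>b. (\<Sum>l\<in>UNIV. G b l p * ?Y l) = 2 * Cp p i j b"
      using Gam_def'[of i j _ p] by (simp add: mult.commute)
  qed
  finally show ?thesis .
qed

end

context RF
begin

lemma CB1_at: assumes p: "p \<in> \<Omega>"
  shows "2 * DivX (Cp p) (Gp p) (RcA (Cp p) (dCp p)) (dRcA (Cp p) (dCp p) (ddCp p)) l
      = dtrX (Cp p) (Gp p) (RcA (Cp p) (dCp p)) (dRcA (Cp p) (dCp p) (ddCp p)) l"
  by (rule CB1_alg) (auto intro: sC_at[OF p] sdC_at[OF p] sdd_at[OF p] HQ0_at[OF p] HQ1_at[OF p])

lemma GNp_swap: assumes p: "p \<in> \<Omega>"
  shows "(\<Sum>r\<in>UNIV. \<Sum>q\<in>UNIV. G r q p * Np p q r l) = (\<Sum>r\<in>UNIV. \<Sum>q\<in>UNIV. G r q p * Np p r q l)"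
proof -
  have "(\<Sum>r\<in>UNIV. \<Sum>q\<in>UNIV. G r q p * Np p q r l) = (\<Sum>q\<in>UNIV. \<Sum>r\<in>UNIV. G r q p * Np p q r l)"
    by (rule sum.swap)
  also have "\<dots> = (\<Sum>q\<in>UNIV. \<Sum>r\<in>UNIV. G q r p * Np p q r l)"
    using sym_G[OF p] by simp
  finally show ?thesis .
qed

lemma T1: assumes p: "p \<in> \<Omega>"
  shows "(\<Sum>r\<in>UNIV. dtil None (Gam r l r) p) = - dtil (Some l) (scal g) p"
proof -
  have e: "(\<Sum>r\<in>UNIV. dtil None (Gam r l r) p)
     = - ((\<Sum>r\<in>UNIV. \<Sum>q\<in>UNIV. G r q p * Np p r l q) + (\<Sum>r\<in>UNIV. \<Sum>q\<in>UNIV. G r q p * Np p l r q)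
         - (\<Sum>r\<in>UNIV. \<Sum>q\<in>UNIV. G r q p * Np p q r l))"
    by (simp add: E2[OF p] sum_negf algebra_simps sum.distrib sum_subtractf)
  have a: "(\<Sum>r\<in>UNIV. \<Sum>q\<in>UNIV. G r q p * Np p r l q) = (\<Sum>r\<in>UNIV. \<Sum>q\<in>UNIV. G r q p * Np p q r l)"
    unfolding GNp_swap[OF p] using Np_sym[OF p] by simp
  have b: "(\<Sum>r\<in>UNIV. \<Sum>q\<in>UNIV. G r q p * Np p l r q) = dtil (Some l) (scal g) p"
    by (simp add: contr_trace dscal_at[OF p] dtrX_def)
  show ?thesis unfolding e a b by simp
qed

lemma B0: assumes p: "p \<in> \<Omega>"
  shows "(\<Sum>j\<in>UNIV. \<Sum>k\<in>UNIV. G j k p * dtil None (Gam j k r) p) = 0"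
proof -
  let ?Z = "\<lambda>j k l. Np p j k l + Np p k j l - Np p l j k"
  have "(\<Sum>j\<in>UNIV. \<Sum>k\<in>UNIV. G j k p * dtil None (Gam j k r) p)
      = - (\<Sum>j\<in>UNIV. \<Sum>k\<in>UNIV. \<Sum>l\<in>UNIV. G j k p * G r l p * ?Z j k l)"
    by (simp add: E2[OF p] sum_negf sum_distrib_left mult.assoc)
  also have "\<dots> = - (\<Sum>l\<in>UNIV. G r l p * (\<Sum>j\<in>UNIV. \<Sum>k\<in>UNIV. G j k p * ?Z j k l))"
  proof -
    have "(\<Sum>j\<in>UNIV. \<Sum>k\<in>UNIV. \<Sum>l\<in>UNIV. G j k p * G r l p * ?Z j k l)
      = (\<Sum>l\<in>UNIV. \<Sum>j\<in>UNIV. \<Sum>k\<in>UNIV. G j k p * G r l p * ?Z j k l)"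
      unfolding sum3_tuple
      by (rule sum.reindex_bij_witness[where i="\<lambda>(l,j,k). (j,k,l)" and j="\<lambda>(j,k,l). (l,j,k)"]) auto
    then show ?thesis by (simp add: sum_distrib_left mult_ac)
  qed
  also have "\<dots> = 0"
  proof -
    have "(\<Sum>j\<in>UNIV. \<Sum>k\<in>UNIV. G j k p * ?Z j k l) = 0" for l
    proof -
      have 1: "(\<Sum>j\<in>UNIV. \<Sum>k\<in>UNIV. G j k p * Np p j k l)
          = DivX (Cp p) (Gp p) (RcA (Cp p) (dCp p)) (dRcA (Cp p) (dCp p) (ddCp p)) l"
        unfolding div_lemma[OF sC_at[OF p], symmetric] using Np_sym[OF p] by simp
      have 2: "(\<Sum>j\<in>UNIV. \<Sum>k\<in>UNIV. G j k p * Np p k j l) = (\<Sum>j\<in>UNIV. \<Sum>k\<in>UNIV. G j k p * Np p j k l)"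
        by (rule GNp_swap[OF p])
      have 3: "(\<Sum>j\<in>UNIV. \<Sum>k\<in>UNIV. G j k p * Np p l j k)
          = dtrX (Cp p) (Gp p) (RcA (Cp p) (dCp p)) (dRcA (Cp p) (dCp p) (ddCp p)) l"
        unfolding contr_trace dtrX_def ..
      have "(\<Sum>j\<in>UNIV. \<Sum>k\<in>UNIV. G j k p * ?Z j k l)
        = (\<Sum>j\<in>UNIV. \<Sum>k\<in>UNIV. G j k p * Np p j k l) + (\<Sum>j\<in>UNIV. \<Sum>k\<in>UNIV. G j k p * Np p k j l)
          - (\<Sum>j\<in>UNIV. \<Sum>k\<in>UNIV. G j k p * Np p l j k)"
        by (simp add: algebra_simps sum.distrib sum_subtractf)
      then show ?thesis unfolding 2 1 3 using CB1_at[OF p, of l] by simp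
    qed
    then show ?thesis by simp
  qed
  finally show ?thesis .
qed

abbreviation "Ap p \<equiv> \<lambda>i j k. dtil None (Gam i j k) p"
abbreviation "dAp p \<equiv> \<lambda>a i j k. dtil (Some a) (dtil None (Gam i j k)) p"

lemma sm_dtGam [simp]: "smooth_on \<Omega> (dtil None (Gam i j k))" by simp

lemma dtRic: assumes p: "p \<in> \<Omega>"
  shows "dtil None (Ric g j k) p = tRcA (Cp p) (Ap p) (dAp p) j k"
proof -
  have s: "dtil None (dtil (Some a) (Gam i j k)) p = dtil (Some a) (dtil None (Gam i j k)) p" for a i j k
    by (rule schwarz_dtil[OF sm_Gam p])
  show ?thesis
    unfolding Ric_fun curv_fun tRcA_def
    by (simp add: d_rules p) (simp add: s algebra_simps sum.distrib sum_subtractf)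
qed

lemma H2: assumes p: "p \<in> \<Omega>"
  shows "dtil None (scal g) p = (\<Sum>r\<in>UNIV. dtil (Some r) (grad_scal g r) p)
     + (\<Sum>r\<in>UNIV. \<Sum>m\<in>UNIV. grad_scal g m p * Gam r m r p)
     + 2 * (\<Sum>r\<in>UNIV. \<Sum>m\<in>UNIV. Ric_up g r m p * Ric_up g m r p)"
proof -
  let ?X = "RcA (Cp p) (dCp p)"
  let ?dS = "\<lambda>l. dtil (Some l) (scal g) p"
  let ?ddS = "\<lambda>j k. dtil (Some j) (dtil (Some k) (scal g)) p"
  have i: "dtil None (scal g) p = (\<Sum>j\<in>UNIV. \<Sum>k\<in>UNIV. dtil None (G j k) p * Ric g j k p)
      + (\<Sum>j\<in>UNIV. \<Sum>k\<in>UNIV. G j k p * tRcA (Cp p) (Ap p) (dAp p) j k)"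
    unfolding scal_fun by (simp add: d_rules p sum.distrib) (simp add: dtRic[OF p])
  have dB: "(\<Sum>j\<in>UNIV. \<Sum>k\<in>UNIV. dGiA (Cp p) (Gp p) r j k * Ap p j k r + G j k p * dAp p r j k r) = 0" for r
  proof -
    have "(\<Sum>j\<in>UNIV. \<Sum>k\<in>UNIV. dGiA (Cp p) (Gp p) r j k * Ap p j k r + G j k p * dAp p r j k r)
        = dtil (Some r) (\<lambda>q. \<Sum>j\<in>UNIV. \<Sum>k\<in>UNIV. G j k q * dtil None (Gam j k r) q) p"
      by (simp add: d_rules p) (simp add: dG_at[OF p])
    also have "\<dots> = dtil (Some r) (\<lambda>q. 0) p"
      by (rule dtil_local[OF opn p]) (rule B0)
    finally show ?thesis by simp
  qed
  have Bv: "(\<Sum>j\<in>UNIV. \<Sum>k\<in>UNIV. G j k p * Ap p j k m) = 0" for m by (rule B0[OF p])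
  have Cv: "(\<Sum>r\<in>UNIV. Ap p r m r) = - ?dS m" for m by (rule T1[OF p])
  have dCv: "(\<Sum>r\<in>UNIV. dAp p j r k r) = - ?ddS j k" for j k
  proof -
    have "(\<Sum>r\<in>UNIV. dAp p j r k r) = dtil (Some j) (\<lambda>q. \<Sum>r\<in>UNIV. dtil None (Gam r k r) q) p"
      by (simp add: d_rules p)
    also have "\<dots> = dtil (Some j) (\<lambda>q. - dtil (Some k) (scal g) q) p"
      by (rule dtil_local[OF opn p]) (rule T1)
    finally show ?thesis by (simp add: d_rules p)
  qed
  have pal: "(\<Sum>j\<in>UNIV. \<Sum>k\<in>UNIV. G j k p * tRcA (Cp p) (Ap p) (dAp p) j k)
      = (\<Sum>j\<in>UNIV. \<Sum>k\<in>UNIV. G j k p * (?ddS j k - (\<Sum>m\<in>UNIV. Cp p j k m * ?dS m)))"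
    unfolding palatini_alg[OF sC_at[OF p]] dB Bv Cv dCv
    by (simp add: sum_negf sum_subtractf algebra_simps)
  have lhs: "dtil None (scal g) p
     = (\<Sum>j\<in>UNIV. \<Sum>k\<in>UNIV. (2 * (\<Sum>a\<in>UNIV. \<Sum>b\<in>UNIV. G j a p * ?X a b * G b k p)) * ?X j k)
     + (\<Sum>j\<in>UNIV. \<Sum>k\<in>UNIV. G j k p * (?ddS j k - (\<Sum>m\<in>UNIV. Cp p j k m * ?dS m)))"
    unfolding i pal by (simp add: E1[OF p] Ric_at)
  have rhs1: "(\<Sum>r\<in>UNIV. dtil (Some r) (grad_scal g r) p)
      = (\<Sum>r\<in>UNIV. \<Sum>l\<in>UNIV. dGiA (Cp p) (Gp p) r r l * ?dS l + G r l p * ?ddS r l)"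
    unfolding grad_scal_fun by (simp add: d_rules p) (simp add: dG_at[OF p])
  have rhs2: "grad_scal g m p = (\<Sum>l\<in>UNIV. G m l p * ?dS l)" for m
    by (simp add: grad_scal_fun)
  show ?thesis
    unfolding lhs rhs1 rhs2 Ric_up_at
    by (rule H2_alg) (rule RcA_sym[OF p])
qed

end

lemma sum_option: "(\<Sum>x\<in>(UNIV::'a::finite option set). f x) = f None + (\<Sum>i\<in>UNIV. f (Some i))"
proof -
  have "(\<Sum>x\<in>(UNIV::'a option set). f x) = (\<Sum>x\<in>insert None (range Some). f x)"
    by (simp only: UNIV_option_conv)
  also have "\<dots> = f None + (\<Sum>x\<in>range Some. f x)" by (subst sum.insert) auto
  also have "(\<Sum>x\<in>range Some. f x) = (\<Sum>i\<in>UNIV. f (Some i))" by (subst sum.reindex) auto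
  finally show ?thesis .
qed

context RF
begin

abbreviation "Gt \<equiv> Gtil g 0"
abbreviation "Rt \<equiv> Rictil g 0"
abbreviation "gt \<equiv> gtil g 0"

lemma d_half: "p \<in> \<Omega> \<Longrightarrow> smooth_on \<Omega> f \<Longrightarrow> dtil a (\<lambda>q. - (f q / 2)) p = - (dtil a f p / 2)"
proof -
  assume "p \<in> \<Omega>" "smooth_on \<Omega> f"
  then have "dtil a (\<lambda>q. (- 1/2) * f q) p = (- 1/2) * dtil a f p"
    by (intro dtil_cmult diffble)
  then show ?thesis by simp
qed

lemma Gt_cases:
  "Gt a b None = (\<lambda>q. 0)"
  "Gt (Some i) (Some j) (Some k) = Gam i j k"
  "Gt (Some i) None (Some k) = (\<lambda>q. - Ric_up g i k q)"
  "Gt None (Some i) (Some k) = (\<lambda>q. - Ric_up g i k q)"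
  "Gt None None (Some k) = (\<lambda>q. - (1/2) * grad_scal g k q)"
  by (auto simp: Gtil_def fun_eq_iff split: option.splits)

lemma gt_cases:
  "gt (Some i) (Some j) = G i j"
  "gt None b = (\<lambda>q. 0)"
  "gt a None = (\<lambda>q. 0)"
  by (auto simp: gtil_def fun_eq_iff split: option.splits)

lemma Rt_expand: "Rt j k q = (\<Sum>r\<in>UNIV. dtil (Some r) (Gt j k (Some r)) q - dtil j (Gt (Some r) k (Some r)) q
   + (\<Sum>m\<in>UNIV. Gt j k (Some m) q * Gt (Some r) (Some m) (Some r) q - Gt (Some r) k (Some m) q * Gt j (Some m) (Some r) q))"
  unfolding Rictil_def ricci_def curv_def sum_option by (simp add: Gt_cases)

lemma Rt_ss: "Rt (Some j) (Some k) q = Ric g j k q"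
  unfolding Rt_expand by (simp add: Gt_cases Ric_def ricci_def curv_def dx_dtil)

lemma scal_Ru: "scal g q = (\<Sum>r\<in>UNIV. Ric_up g r r q)"
  by (simp add: scal_def Ric_up_def)

lemma Rt_s0: assumes p: "p \<in> \<Omega>"
  shows "Rt (Some l) None p = 1/2 * dtil (Some l) (scal g) p"
proof -
  have sc: "dtil (Some l) (\<lambda>q. \<Sum>r\<in>UNIV. Ric_up g r r q) p = dtil (Some l) (scal g) p"
    by (simp add: scal_Ru[symmetric])
  have "Rt (Some l) None p = - (\<Sum>r\<in>UNIV. dtil (Some r) (Ric_up g l r) p + (\<Sum>m\<in>UNIV. Ric_up g l m p * Gam r m r p)
           - (\<Sum>m\<in>UNIV. Ric_up g r m p * Gam l m r p)) + dtil (Some l) (\<lambda>q. \<Sum>r\<in>UNIV. Ric_up g r r q) p"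
    unfolding Rt_expand
    by (simp add: Gt_cases d_rules p) (simp add: algebra_simps sum.distrib sum_subtractf sum_negf)
  then show ?thesis unfolding sc CB1[OF p] by simp
qed

lemma Rt_0s: assumes p: "p \<in> \<Omega>"
  shows "Rt None (Some l) p = 1/2 * dtil (Some l) (scal g) p"
proof -
  have sw: "(\<Sum>r\<in>UNIV. \<Sum>m\<in>UNIV. Gam r l m p * Ric_up g m r p) = (\<Sum>r\<in>UNIV. \<Sum>m\<in>UNIV. Ric_up g r m p * Gam l m r p)"
  proof -
    have "(\<Sum>r\<in>UNIV. \<Sum>m\<in>UNIV. Gam r l m p * Ric_up g m r p) = (\<Sum>m\<in>UNIV. \<Sum>r\<in>UNIV. Gam r l m p * Ric_up g m r p)"
      by (rule sum.swap)
    then show ?thesis using Gam_sym[OF p] by (simp add: mult.commute)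
  qed
  have "Rt None (Some l) p = - (\<Sum>r\<in>UNIV. dtil (Some r) (Ric_up g l r) p + (\<Sum>m\<in>UNIV. Ric_up g l m p * Gam r m r p)
           - (\<Sum>m\<in>UNIV. Ric_up g r m p * Gam l m r p)) - (\<Sum>r\<in>UNIV. dtil None (Gam r l r) p)"
  proof -
    have "Rt None (Some l) p = - (\<Sum>r\<in>UNIV. dtil (Some r) (Ric_up g l r) p) - (\<Sum>r\<in>UNIV. dtil None (Gam r l r) p)
       - (\<Sum>r\<in>UNIV. \<Sum>m\<in>UNIV. Ric_up g l m p * Gam r m r p) + (\<Sum>r\<in>UNIV. \<Sum>m\<in>UNIV. Gam r l m p * Ric_up g m r p)"
      unfolding Rt_expand
      by (simp add: Gt_cases d_rules p) (simp add: algebra_simps sum.distrib sum_subtractf sum_negf)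
    then show ?thesis unfolding sw by (simp add: sum.distrib sum_subtractf)
  qed
  then show ?thesis unfolding CB1[OF p] T1[OF p] by simp
qed

lemma Rt_00: assumes p: "p \<in> \<Omega>"
  shows "Rt None None p = 1/2 * dtil None (scal g) p"
proof -
  have sc: "dtil None (\<lambda>q. \<Sum>r\<in>UNIV. Ric_up g r r q) p = dtil None (scal g) p"
    by (simp add: scal_Ru[symmetric])
  have "Rt None None p = - 1/2 * ((\<Sum>r\<in>UNIV. dtil (Some r) (grad_scal g r) p)
     + (\<Sum>r\<in>UNIV. \<Sum>m\<in>UNIV. grad_scal g m p * Gam r m r p))
     + dtil None (\<lambda>q. \<Sum>r\<in>UNIV. Ric_up g r r q) p - (\<Sum>r\<in>UNIV. \<Sum>m\<in>UNIV. Ric_up g r m p * Ric_up g m r p)"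
    unfolding Rt_expand
    by (simp add: Gt_cases d_rules d_half p) (simp add: algebra_simps sum.distrib sum_subtractf sum_negf sum_distrib_left)
  then show ?thesis unfolding sc using H2[OF p] by (simp add: algebra_simps)
qed

end

lemma sq_alg1:
  fixes Gi X :: "'i::finite \<Rightarrow> 'i \<Rightarrow> real"
  assumes sX: "\<And>i j. X i j = X j i"
  shows "(\<Sum>j\<in>UNIV. (2 * (\<Sum>a\<in>UNIV. \<Sum>b\<in>UNIV. Gi k a * X a b * Gi b j)) * X i j)
     = 2 * (\<Sum>l\<in>UNIV. Gi k l * (\<Sum>m\<in>UNIV. RuX Gi X i m * X m l))"
proof -
  have "(\<Sum>j\<in>UNIV. (2 * (\<Sum>a\<in>UNIV. \<Sum>b\<in>UNIV. Gi k a * X a b * Gi b j)) * X i j)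
      = 2 * (\<Sum>j\<in>UNIV. \<Sum>a\<in>UNIV. \<Sum>b\<in>UNIV. Gi k a * X a b * Gi b j * X i j)"
    by (simp add: sum_distrib_left sum_distrib_right mult.assoc)
  also have "(\<Sum>j\<in>UNIV. \<Sum>a\<in>UNIV. \<Sum>b\<in>UNIV. Gi k a * X a b * Gi b j * X i j)
      = (\<Sum>l\<in>UNIV. \<Sum>m\<in>UNIV. \<Sum>j\<in>UNIV. Gi k l * (Gi m j * X i j * X m l))"
    unfolding sum3_tuple
    by (rule sum.reindex_bij_witness[where i="\<lambda>(l,m,j). (j,l,m)" and j="\<lambda>(j,a,b). (a,b,j)"])
       (auto simp: mult_ac sX[of _ b for b])
  also have "\<dots> = (\<Sum>l\<in>UNIV. Gi k l * (\<Sum>m\<in>UNIV. RuX Gi X i m * X m l))"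
    unfolding RuX_def by (simp add: sum_distrib_left sum_distrib_right)
  finally show ?thesis .
qed

lemma sq_alg2:
  fixes Gi X :: "'i::finite \<Rightarrow> 'i \<Rightarrow> real"
  assumes sX: "\<And>i j. X i j = X j i"
  shows "(\<Sum>l\<in>UNIV. (2 * (\<Sum>a\<in>UNIV. \<Sum>b\<in>UNIV. Gi k a * X a b * Gi b l)) * dS l)
     = 2 * (\<Sum>l\<in>UNIV. Gi k l * (\<Sum>m\<in>UNIV. (\<Sum>j\<in>UNIV. Gi m j * dS j) * X m l))"
proof -
  have "(\<Sum>l\<in>UNIV. (2 * (\<Sum>a\<in>UNIV. \<Sum>b\<in>UNIV. Gi k a * X a b * Gi b l)) * dS l)
      = 2 * (\<Sum>l\<in>UNIV. \<Sum>a\<in>UNIV. \<Sum>b\<in>UNIV. Gi k a * X a b * Gi b l * dS l)"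
    by (simp add: sum_distrib_left sum_distrib_right mult.assoc)
  also have "(\<Sum>l\<in>UNIV. \<Sum>a\<in>UNIV. \<Sum>b\<in>UNIV. Gi k a * X a b * Gi b l * dS l)
      = (\<Sum>l\<in>UNIV. \<Sum>m\<in>UNIV. \<Sum>j\<in>UNIV. Gi k l * (Gi m j * dS j * X m l))"
    unfolding sum3_tuple
    by (rule sum.reindex_bij_witness[where i="\<lambda>(l',m,j). (j,l',m)" and j="\<lambda>(l,a,b). (a,b,l)"])
       (auto simp: mult_ac sX[of _ b for b])
  also have "\<dots> = (\<Sum>l\<in>UNIV. Gi k l * (\<Sum>m\<in>UNIV. (\<Sum>j\<in>UNIV. Gi m j * dS j) * X m l))"
    by (simp add: sum_distrib_left sum_distrib_right)
  finally show ?thesis .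
qed

context RF
begin

abbreviation "cov \<equiv> covd2 dtil Gt Rt"

lemma cov_expand: "cov a b l p = dtil a (Rt b l) p - (\<Sum>m\<in>UNIV. Gt a b (Some m) p * Rt (Some m) l p)
   - (\<Sum>m\<in>UNIV. Gt a l (Some m) p * Rt b (Some m) p)"
  unfolding covd2_def sum_option by (simp add: Gt_cases)

lemma Rt_ss_fun: "Rt (Some j) (Some k) = Ric g j k"
  by (rule ext) (rule Rt_ss)

lemma dRt_s0: "p \<in> \<Omega> \<Longrightarrow> dtil a (Rt (Some l) None) p = 1/2 * dtil a (dtil (Some l) (scal g)) p"
proof -
  assume p: "p \<in> \<Omega>"
  have "dtil a (Rt (Some l) None) p = dtil a (\<lambda>q. 1/2 * dtil (Some l) (scal g) q) p"
    by (rule dtil_local[OF opn p]) (rule Rt_s0)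
  also have "\<dots> = 1/2 * dtil a (dtil (Some l) (scal g)) p"
    by (rule dtil_cmult, rule diffble[OF _ p]) simp
  finally show ?thesis .
qed

lemma dRt_0s: "p \<in> \<Omega> \<Longrightarrow> dtil a (Rt None (Some l)) p = 1/2 * dtil a (dtil (Some l) (scal g)) p"
proof -
  assume p: "p \<in> \<Omega>"
  have "dtil a (Rt None (Some l)) p = dtil a (\<lambda>q. 1/2 * dtil (Some l) (scal g) q) p"
    by (rule dtil_local[OF opn p]) (rule Rt_0s)
  also have "\<dots> = 1/2 * dtil a (dtil (Some l) (scal g)) p"
    by (rule dtil_cmult, rule diffble[OF _ p]) simp
  finally show ?thesis .
qed

lemma dRt_00: "p \<in> \<Omega> \<Longrightarrow> dtil a (Rt None None) p = 1/2 * dtil a (dtil None (scal g)) p"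
proof -
  assume p: "p \<in> \<Omega>"
  have "dtil a (Rt None None) p = dtil a (\<lambda>q. 1/2 * dtil None (scal g) q) p"
    by (rule dtil_local[OF opn p]) (rule Rt_00)
  also have "\<dots> = 1/2 * dtil a (dtil None (scal g)) p"
    by (rule dtil_cmult, rule diffble[OF _ p]) simp
  finally show ?thesis .
qed

lemma cov_sss: "p \<in> \<Omega> \<Longrightarrow> cov (Some i) (Some j) (Some l) p = Np p i j l"
  unfolding cov_expand nab2A_def by (simp add: Gt_cases Rt_ss_fun Rt_ss dRic_at Ric_at)

abbreviation "dS p l \<equiv> dtil (Some l) (scal g) p"
abbreviation "ddS p i l \<equiv> dtil (Some i) (dtil (Some l) (scal g)) p"

lemma cov_s0s: "p \<in> \<Omega> \<Longrightarrow> cov (Some i) None (Some l) p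
   = 1/2 * ddS p i l + (\<Sum>m\<in>UNIV. Ric_up g i m p * Ric g m l p) - (\<Sum>m\<in>UNIV. Gam i l m p * (1/2 * dS p m))"
  unfolding cov_expand by (simp add: Gt_cases Rt_ss dRt_0s Rt_0s sum_negf)

lemma cov_0ss: "p \<in> \<Omega> \<Longrightarrow> cov None (Some i) (Some l) p
   = dtil None (Ric g i l) p + (\<Sum>m\<in>UNIV. Ric_up g i m p * Ric g m l p) + (\<Sum>m\<in>UNIV. Ric_up g l m p * Ric g i m p)"
  unfolding cov_expand by (simp add: Gt_cases Rt_ss Rt_ss_fun sum_negf)

lemma cov_ss0: "p \<in> \<Omega> \<Longrightarrow> cov (Some l) (Some i) None p
   = 1/2 * ddS p l i - (\<Sum>m\<in>UNIV. Gam l i m p * (1/2 * dS p m)) + (\<Sum>m\<in>UNIV. Ric_up g l m p * Ric g i m p)"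
  unfolding cov_expand by (simp add: Gt_cases Rt_ss dRt_s0 Rt_s0 sum_negf)

lemma cov_00s: "p \<in> \<Omega> \<Longrightarrow> cov None None (Some l) p
   = 1/2 * dtil None (dtil (Some l) (scal g)) p + 1/2 * (\<Sum>m\<in>UNIV. grad_scal g m p * Ric g m l p)
     + (\<Sum>m\<in>UNIV. Ric_up g l m p * (1/2 * dS p m))"
  unfolding cov_expand by (simp add: Gt_cases Rt_ss dRt_0s Rt_0s sum_negf sum_distrib_left)

lemma cov_s00: "p \<in> \<Omega> \<Longrightarrow> cov (Some l) None None p
   = 1/2 * dtil (Some l) (dtil None (scal g)) p + 2 * (\<Sum>m\<in>UNIV. Ric_up g l m p * (1/2 * dS p m))"
  unfolding cov_expand by (simp add: Gt_cases dRt_00 Rt_s0 Rt_0s sum_negf)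

lemma sum_gt: "(\<Sum>l\<in>UNIV. gt (Some k) l p * F l) = (\<Sum>l\<in>UNIV. G k l p * F (Some l))"
  unfolding sum_option by (simp add: gt_cases)

lemma sum_gt0: "(\<Sum>l\<in>UNIV. gt None l p * F l) = 0"
  by (simp add: gt_cases)

lemma evo_g: assumes p: "p \<in> \<Omega>"
  shows "dt (gt a b) p = 2 * (\<Sum>k\<in>UNIV. \<Sum>l\<in>UNIV. gt a k p * gt b l p * Rt k l p)"
proof (cases a)
  case None then show ?thesis by (simp add: gt_cases dt_dtil)
next
  case (Some i) note a = this
  show ?thesis
  proof (cases b)
    case None then show ?thesis by (simp add: gt_cases dt_dtil)
  next
    case (Some j)
    have "dt (gt a b) p = 2 * (\<Sum>k\<in>UNIV. \<Sum>l\<in>UNIV. G i k p * RcA (Cp p) (dCp p) k l * G l j p)"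
      using a Some by (simp add: gt_cases dt_dtil E1[OF p])
    also have "\<dots> = 2 * (\<Sum>k\<in>UNIV. \<Sum>l\<in>UNIV. G i k p * G j l p * Ric g k l p)"
      by (simp add: Ric_at sym_G[OF p, of _ j] mult_ac)
    also have "\<dots> = 2 * (\<Sum>k\<in>UNIV. \<Sum>l\<in>UNIV. gt a k p * gt b l p * Rt k l p)"
      using a Some by (simp add: sum_option gt_cases Rt_ss)
    finally show ?thesis .
  qed
qed

lemma dtRic_up: "p \<in> \<Omega> \<Longrightarrow> dtil None (Ric_up g i k) p
   = (\<Sum>j\<in>UNIV. dtil None (G k j) p * Ric g i j p + G k j p * dtil None (Ric g i j) p)"
  unfolding Ric_up_fun by (simp add: d_rules)

lemma evo_Gam_s0: assumes p: "p \<in> \<Omega>"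
  shows "dtil None (\<lambda>q. - Ric_up g i k q) p = - (\<Sum>l\<in>UNIV. G k l p * (dtil None (Ric g i l) p
      + 2 * (\<Sum>m\<in>UNIV. Ric_up g i m p * Ric g m l p)))"
proof -
  have 1: "(\<Sum>j\<in>UNIV. dtil None (G k j) p * Ric g i j p) = 2 * (\<Sum>l\<in>UNIV. G k l p * (\<Sum>m\<in>UNIV. Ric_up g i m p * Ric g m l p))"
    unfolding E1[OF p] Ric_at Ric_up_at by (rule sq_alg1) (rule RcA_sym[OF p])
  have "dtil None (\<lambda>q. - Ric_up g i k q) p = - dtil None (Ric_up g i k) p"
    by (rule d_rules(4)[OF p]) simp
  also have "\<dots> = - ((\<Sum>j\<in>UNIV. dtil None (G k j) p * Ric g i j p) + (\<Sum>j\<in>UNIV. G k j p * dtil None (Ric g i j) p))"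
    by (simp only: dtRic_up[OF p] sum.distrib)
  also have "\<dots> = - (2 * (\<Sum>l\<in>UNIV. G k l p * (\<Sum>m\<in>UNIV. Ric_up g i m p * Ric g m l p))
      + (\<Sum>j\<in>UNIV. G k j p * dtil None (Ric g i j) p))"
    by (simp only: 1)
  also have "\<dots> = - (\<Sum>l\<in>UNIV. G k l p * (dtil None (Ric g i l) p
      + 2 * (\<Sum>m\<in>UNIV. Ric_up g i m p * Ric g m l p)))"
    by (simp add: distrib_left sum.distrib sum_distrib_left mult_ac)
  finally show ?thesis .
qed

lemma evo_Gam: assumes p: "p \<in> \<Omega>"
  shows "dt (Gt a b c) p = - (\<Sum>l\<in>UNIV. gt c l p * (cov a b l p + cov b a l p - cov l a b p))"
proof (cases c)
  case None then show ?thesis by (simp add: gt_cases Gt_cases dt_dtil)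
next
  case (Some k) note c = this
  have R: "(\<Sum>l\<in>UNIV. gt c l p * (cov a b l p + cov b a l p - cov l a b p))
     = (\<Sum>l\<in>UNIV. G k l p * (cov a b (Some l) p + cov b a (Some l) p - cov (Some l) a b p))"
    unfolding c by (rule sum_gt)
  have sch: "ddS p i l = ddS p l i" for i l by (rule schwarz_dtil[OF sm_scal p])
  show ?thesis unfolding R
  proof (cases a)
    case None note a = this
    show "dt (Gt a b c) p = - (\<Sum>l\<in>UNIV. G k l p * (cov a b (Some l) p + cov b a (Some l) p - cov (Some l) a b p))"
    proof (cases b)
      case None
      have e: "cov None None (Some l) p + cov None None (Some l) p - cov (Some l) None None p
          = 1/2 * dtil None (dtil (Some l) (scal g)) p + (\<Sum>m\<in>UNIV. grad_scal g m p * Ric g m l p)" for l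
        unfolding cov_00s[OF p] cov_s00[OF p] schwarz_dtil[OF sm_scal p, of "Some l" None]
        by (simp add: algebra_simps)
      have lhs: "dt (Gt None None c) p = - (1/2) * (\<Sum>l\<in>UNIV. dtil None (G k l) p * dS p l
          + G k l p * dtil None (dtil (Some l) (scal g)) p)"
        unfolding c Gt_cases dt_dtil by (simp add: d_half p grad_scal_fun d_rules)
      have 2: "(\<Sum>l\<in>UNIV. dtil None (G k l) p * dS p l)
          = 2 * (\<Sum>l\<in>UNIV. G k l p * (\<Sum>m\<in>UNIV. grad_scal g m p * Ric g m l p))"
        unfolding E1[OF p] grad_scal_fun Ric_at by (rule sq_alg2) (rule RcA_sym[OF p])
      let ?M = "\<lambda>l. \<Sum>m\<in>UNIV. grad_scal g m p * Ric g m l p"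
      have eqR: "(\<Sum>l\<in>UNIV. G k l p * (cov None None (Some l) p + cov None None (Some l) p - cov (Some l) None None p))
          = 1/2 * (\<Sum>l\<in>UNIV. G k l p * dtil None (dtil (Some l) (scal g)) p) + (\<Sum>l\<in>UNIV. G k l p * ?M l)"
        by (simp only: e distrib_left sum.distrib) (simp add: sum_distrib_left mult_ac)
      have eqL: "dt (Gt None None c) p = - (1/2) * ((\<Sum>l\<in>UNIV. dtil None (G k l) p * dS p l)
          + (\<Sum>l\<in>UNIV. G k l p * dtil None (dtil (Some l) (scal g)) p))"
        by (simp only: lhs sum.distrib)
      show ?thesis unfolding a None eqL eqR 2 by (simp add: algebra_simps)
    next
      case (Some i)
      have e: "cov None (Some i) (Some l) p + cov (Some i) None (Some l) p - cov (Some l) None (Some i) p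
          = dtil None (Ric g i l) p + 2 * (\<Sum>m\<in>UNIV. Ric_up g i m p * Ric g m l p)" for l
        unfolding cov_0ss[OF p] cov_s0s[OF p] sch[of i l] using Gam_sym[OF p, of i l] Ric_sym[OF p, of i]
        by (simp add: algebra_simps)
      show ?thesis unfolding a Some c Gt_cases dt_dtil evo_Gam_s0[OF p] e ..
    qed
  next
    case (Some i) note a = this
    show "dt (Gt a b c) p = - (\<Sum>l\<in>UNIV. G k l p * (cov a b (Some l) p + cov b a (Some l) p - cov (Some l) a b p))"
    proof (cases b)
      case None
      have e: "cov (Some i) None (Some l) p + cov None (Some i) (Some l) p - cov (Some l) (Some i) None p
          = dtil None (Ric g i l) p + 2 * (\<Sum>m\<in>UNIV. Ric_up g i m p * Ric g m l p)" for l
        unfolding cov_0ss[OF p] cov_s0s[OF p] cov_ss0[OF p] sch[of i l] using Gam_sym[OF p, of i l]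
        by (simp add: algebra_simps)
      show ?thesis unfolding a None c Gt_cases dt_dtil evo_Gam_s0[OF p] e ..
    next
      case (Some j)
      show ?thesis unfolding a Some c Gt_cases dt_dtil E2[OF p] cov_sss[OF p] ..
    qed
  qed
qed

end

definition shf :: "'a::real_normed_vector \<Rightarrow> ('a \<Rightarrow> real) \<Rightarrow> 'a \<Rightarrow> real" where
  "shf s f = (\<lambda>q. f (q + s))"

lemma shf_apply [simp]: "shf s f p = f (p + s)"
  by (simp add: shf_def)

lemma dtil_shf [simp]: "dtil a (shf s f) p = dtil a f (p + s)"
  unfolding shf_def by (rule dtil_shift)

lemma gtil_shift: "gtil g \<tau> a b = shf (0, \<tau>) (gtil g 0 a b)"
  by (rule ext) (simp add: gtil_def split: option.splits)

lemma Gtil_shift: "Gtil g \<tau> a b c = shf (0, \<tau>) (Gtil g 0 a b c)"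
  by (rule ext) (simp add: Gtil_def Let_def split: option.splits)

lemma ricci_shift:
  "ricci dtil (\<lambda>a b c. shf s (F a b c)) j k p = ricci dtil F j k (p + s)"
  unfolding ricci_def curv_def by simp

lemma covd2_shift:
  "covd2 dtil (\<lambda>a b c. shf s (F a b c)) (\<lambda>a b. shf s (R a b)) i j l p = covd2 dtil F R i j l (p + s)"
  unfolding covd2_def by simp

lemma Gtil_shift_fun: "Gtil g \<tau> = (\<lambda>a b c. shf (0, \<tau>) (Gtil g 0 a b c))"
  by (intro ext) (simp only: Gtil_shift[of g \<tau>])

lemma Rictil_shift: "Rictil g \<tau> j k p = Rictil g 0 j k (p + (0, \<tau>))"
  unfolding Rictil_def Gtil_shift_fun[of g \<tau>] by (rule ricci_shift)

lemma Rictil_shift_fun: "Rictil g \<tau> = (\<lambda>a b. shf (0, \<tau>) (Rictil g 0 a b))"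
  by (intro ext) (simp only: shf_apply Rictil_shift[of g \<tau>])

lemma covd2_til_shift:
  "covd2 dtil (Gtil g \<tau>) (Rictil g \<tau>) i j l p = covd2 dtil (Gtil g 0) (Rictil g 0) i j l (p + (0, \<tau>))"
  unfolding Gtil_shift_fun[of g \<tau>] Rictil_shift_fun[of g \<tau>] by (rule covd2_shift)

lemma dt_shf: "dt (shf s f) p = dt f (p + s)"
  unfolding dt_dtil by (rule dtil_shf)

theorem theorem2p1:
  fixes U :: "(real^'n::finite) set" and T \<tau> :: real
    and g :: "'n \<Rightarrow> 'n \<Rightarrow> 'n pt \<Rightarrow> real"
  assumes "ricci_flow_on U T g"
    and "0 \<le> \<tau>" and "\<tau> < T"
  shows "\<forall>x t. x \<in> U \<longrightarrow> 0 < t \<longrightarrow> t < T - \<tau> \<longrightarrow>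
    (\<forall>a b. dt (gtil g \<tau> a b) (x, t) =
        2 * (\<Sum>k\<in>UNIV. \<Sum>l\<in>UNIV. gtil g \<tau> a k (x, t) * gtil g \<tau> b l (x, t) * Rictil g \<tau> k l (x, t)))
    \<and> (\<forall>a b c. dt (Gtil g \<tau> a b c) (x, t) =
        - (\<Sum>l\<in>UNIV. gtil g \<tau> c l (x, t) *
            (covd2 dtil (Gtil g \<tau>) (Rictil g \<tau>) a b l (x, t)
             + covd2 dtil (Gtil g \<tau>) (Rictil g \<tau>) b a l (x, t)
             - covd2 dtil (Gtil g \<tau>) (Rictil g \<tau>) l a b (x, t))))"
proof (intro allI impI)
  fix x t assume x: "x \<in> U" and t0: "0 < t" and t1: "t < T - \<tau>"
  have rf: "ricci_flow_on U T g" by fact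
  have oU: "open U" using rf unfolding ricci_flow_on_def by blast
  have r1: "\<And>i j. smooth_on (U \<times> {0<..<T}) (g i j)" using rf unfolding ricci_flow_on_def by blast
  have r2: "\<And>i j p. p \<in> U \<times> {0<..<T} \<Longrightarrow> g i j p = g j i p" using rf unfolding ricci_flow_on_def by blast
  have r3: "\<And>p v. p \<in> U \<times> {0<..<T} \<Longrightarrow> v \<noteq> 0 \<Longrightarrow> v \<bullet> (gmat g p *v v) > 0"
    using rf unfolding ricci_flow_on_def by blast
  have r4: "\<And>i j p. p \<in> U \<times> {0<..<T} \<Longrightarrow> dt (g i j) p = -2 * Ric g i j p"
    using rf unfolding ricci_flow_on_def by blast
  have o: "open (U \<times> {0<..<T})" using oU by (intro open_Times) auto
  have rfI: "RF (U \<times> {0<..<T}) g" by (rule RF.intro[OF o r1 r2 r3 r4])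
  let ?p = "(x, t) + (0, \<tau>)"
  have p: "?p \<in> U \<times> {0<..<T}" using x t0 t1 assms(2) by auto
  show "(\<forall>a b. dt (gtil g \<tau> a b) (x, t) =
        2 * (\<Sum>k\<in>UNIV. \<Sum>l\<in>UNIV. gtil g \<tau> a k (x, t) * gtil g \<tau> b l (x, t) * Rictil g \<tau> k l (x, t)))
    \<and> (\<forall>a b c. dt (Gtil g \<tau> a b c) (x, t) =
        - (\<Sum>l\<in>UNIV. gtil g \<tau> c l (x, t) *
            (covd2 dtil (Gtil g \<tau>) (Rictil g \<tau>) a b l (x, t)
             + covd2 dtil (Gtil g \<tau>) (Rictil g \<tau>) b a l (x, t)
             - covd2 dtil (Gtil g \<tau>) (Rictil g \<tau>) l a b (x, t))))"
  proof (intro conjI allI)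
    fix a b
    show "dt (gtil g \<tau> a b) (x, t) =
        2 * (\<Sum>k\<in>UNIV. \<Sum>l\<in>UNIV. gtil g \<tau> a k (x, t) * gtil g \<tau> b l (x, t) * Rictil g \<tau> k l (x, t))"
      unfolding gtil_shift[of g \<tau>] Rictil_shift[of g \<tau>] dt_shf shf_apply using RF.evo_g[OF rfI p] by simp
  next
    fix a b c
    show "dt (Gtil g \<tau> a b c) (x, t) =
        - (\<Sum>l\<in>UNIV. gtil g \<tau> c l (x, t) *
            (covd2 dtil (Gtil g \<tau>) (Rictil g \<tau>) a b l (x, t)
             + covd2 dtil (Gtil g \<tau>) (Rictil g \<tau>) b a l (x, t)
             - covd2 dtil (Gtil g \<tau>) (Rictil g \<tau>) l a b (x, t)))"
      unfolding covd2_til_shift[of g \<tau>] Gtil_shift[of g \<tau> a b c] gtil_shift[of g \<tau>] dt_shf shf_apply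
      using RF.evo_Gam[OF rfI p] by simp
  qed
qed


end
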